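(* Let $R\subseteq\mathbb R$ be an archimedean real closed field, let $F$ be a formally real extension field of $R$, and let $\xi$ be an $\mathbb R$-place of $F$ with $\xi|_R=\mathrm{id}_R$; put $\overline F=\xi(F)\setminus\{\infty\}\subseteq\mathbb R$. Let $\xi_y$ be the constant extension of $\xi$ to $F(y)$, and for $\zeta\in M(R(y))$ let $\zeta_{\overline F}$ be the constant extension of $\zeta$ to $\overline F(y)$. Then the map $\iota:M(R(y))\to M(F(y))$, $\iota(\zeta)=\zeta_{\overline F}\circ\xi_y$, is a continuous injective map.
   Context: For a field $K$, $M(K)$ is the set of $\mathbb R$-places $K\to\mathbb R\cup\{\infty\}$, with topology generated by the subbasis $H'(b)=\{\zeta\in M(K)\mid \infty\ne\zeta(b)>0\}$, $b\in K$. The constant (Gauss) extension $\xi_y$ of $\xi$ to $F(y)$ is the place of $F(y)$ extending $\xi$ whose valuation is the Gauss valuation: on a polynomial $\sum c_iy^i\in F[y]$ with all $c_i$ in the valuation ring of $\xi$ it acts by applying $\xi$ to the coefficients, and its residue field is $\overline F(y)$. Every $\zeta\in M(R(y))$ is the identity on $R$; its constant extension $\zeta_{\overline F}$ is the unique $\mathbb R$-place of $\overline F(y)$ which is the identity on $\overline F$ and satisfies $\zeta_{\overline F}(y)=\zeta(y)$ (if $\zeta(y)=a\in R$ this is the place determined by $y-a$, if $\zeta(y)=\infty$ the place determined by $1/y$). $R(y)$, $F(y)$, $\overline F(y)$ are rational function fields in one variable $y$. *)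

theory Defs
  imports "HOL-Analysis.Analysis" "HOL-Computational_Algebra.Polynomial"
          "HOL-Computational_Algebra.Fraction_Field"
begin

text \<open>Values in L \<union> {\<infinity>} are modelled by option: None = \<infinity>.\<close>

definition is_subfield :: "'a::field set \<Rightarrow> bool" where
  "is_subfield K \<longleftrightarrow> 0 \<in> K \<and> 1 \<in> K \<and>
     (\<forall>a\<in>K. \<forall>b\<in>K. a + b \<in> K \<and> a * b \<in> K) \<and>
     (\<forall>a\<in>K. - a \<in> K) \<and> (\<forall>a\<in>K. a \<noteq> 0 \<longrightarrow> inverse a \<in> K)"

definition real_closed_subfield :: "real set \<Rightarrow> bool" where
  "real_closed_subfield R \<longleftrightarrow> is_subfield R \<and>
     (\<forall>a\<in>R. a \<ge> 0 \<longrightarrow> (\<exists>b\<in>R. b * b = a)) \<and>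
     (\<forall>p::real poly. (\<forall>i. coeff p i \<in> R) \<and> odd (degree p) \<longrightarrow> (\<exists>x\<in>R. poly p x = 0))"

definition archimedean_set :: "real set \<Rightarrow> bool" where
  "archimedean_set R \<longleftrightarrow> (\<forall>x\<in>R. \<exists>n::nat. x < of_nat n)"

definition formally_real :: "'f::field itself \<Rightarrow> bool" where
  "formally_real _ \<longleftrightarrow> \<not> (\<exists>xs::'f list. sum_list (map (\<lambda>x. x * x) xs) = -1)"

definition field_embedding_on :: "real set \<Rightarrow> (real \<Rightarrow> 'f::field) \<Rightarrow> bool" where
  "field_embedding_on R e \<longleftrightarrow> e 1 = 1 \<and> inj_on e R \<and>
     (\<forall>a\<in>R. \<forall>b\<in>R. e (a + b) = e a + e b \<and> e (a * b) = e a * e b)"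

definition place_on :: "'a::field set \<Rightarrow> 'b::field set \<Rightarrow> ('a \<Rightarrow> 'b option) \<Rightarrow> bool" where
  "place_on K L P \<longleftrightarrow>
     (\<forall>a\<in>K. \<forall>x. P a = Some x \<longrightarrow> x \<in> L) \<and>
     P 1 = Some 1 \<and>
     (\<forall>a\<in>K. \<forall>b\<in>K. \<forall>x y. P a = Some x \<and> P b = Some y \<longrightarrow>
          P (a + b) = Some (x + y) \<and> P (a * b) = Some (x * y)) \<and>
     (\<forall>a\<in>K. a \<noteq> 0 \<longrightarrow> (P a = None \<longleftrightarrow> P (inverse a) = Some 0))"

definition M :: "'a::field set \<Rightarrow> ('a \<Rightarrow> real option) set" where
  "M K = {P. place_on K UNIV P \<and> (\<forall>a. a \<notin> K \<longrightarrow> P a = None)}"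

definition H' :: "'a::field set \<Rightarrow> 'a \<Rightarrow> ('a \<Rightarrow> real option) set" where
  "H' K b = {\<zeta> \<in> M K. \<exists>r. \<zeta> b = Some r \<and> r > 0}"

definition Mtop :: "'a::field set \<Rightarrow> ('a \<Rightarrow> real option) topology" where
  "Mtop K = topology_generated_by {H' K b | b. b \<in> K}"

definition ratfun :: "real set \<Rightarrow> real poly fract set" where
  "ratfun S = {Fract p q | p q. q \<noteq> 0 \<and> (\<forall>i. coeff p i \<in> S) \<and> (\<forall>i. coeff q i \<in> S)}"

definition yvar :: "'a::field poly fract" where
  "yvar = Fract [:0, 1:] 1"

definition cst :: "'a::field \<Rightarrow> 'a poly fract" where
  "cst c = Fract [:c:] 1"

definition residue_field :: "('f::field \<Rightarrow> real option) \<Rightarrow> real set" where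
  "residue_field \<xi> = {r. \<exists>x. \<xi> x = Some r}"

definition gauss_ext :: "('f::field \<Rightarrow> real option) \<Rightarrow> ('f poly fract \<Rightarrow> real poly fract option)" where
  "gauss_ext \<xi> = (THE P. place_on UNIV (ratfun (residue_field \<xi>)) P \<and>
      (\<forall>p. (\<forall>i. \<xi> (coeff p i) \<noteq> None) \<longrightarrow>
            P (Fract p 1) = Some (Fract (map_poly (\<lambda>c. the (\<xi> c)) p) 1)))"

definition const_ext :: "real set \<Rightarrow> (real poly fract \<Rightarrow> real option) \<Rightarrow> (real poly fract \<Rightarrow> real option)" where
  "const_ext Fb \<zeta> = (THE Q. Q \<in> M (ratfun Fb) \<and> (\<forall>c\<in>Fb. Q (cst c) = Some c) \<and> Q yvar = \<zeta> yvar)"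

definition comp_place :: "('b \<Rightarrow> real option) \<Rightarrow> ('a \<Rightarrow> 'b option) \<Rightarrow> 'a \<Rightarrow> real option" where
  "comp_place Q P a = (case P a of None \<Rightarrow> None | Some b \<Rightarrow> Q b)"

definition iota :: "('f::field \<Rightarrow> real option) \<Rightarrow> (real poly fract \<Rightarrow> real option) \<Rightarrow> ('f poly fract \<Rightarrow> real option)" where
  "iota \<xi> \<zeta> = comp_place (const_ext (residue_field \<xi>) \<zeta>) (gauss_ext \<xi>)"

end

theory Submission
  imports Defs
begin

lemma subfield_UNIV: "is_subfield (UNIV :: 'a::field set)"
  by (simp add: is_subfield_def)

lemma subfieldD:
  assumes "is_subfield K"
  shows "0 \<in> K" "1 \<in> K" "a \<in> K \<Longrightarrow> b \<in> K \<Longrightarrow> a + b \<in> K"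
    "a \<in> K \<Longrightarrow> b \<in> K \<Longrightarrow> a * b \<in> K" "a \<in> K \<Longrightarrow> -a \<in> K"
    "a \<in> K \<Longrightarrow> inverse a \<in> K"
  using assms unfolding is_subfield_def
  apply simp_all
  by (cases "a = 0") auto

lemma subfield_diff: "is_subfield K \<Longrightarrow> a \<in> K \<Longrightarrow> b \<in> K \<Longrightarrow> a - b \<in> K"
  by (metis diff_conv_add_uminus subfieldD(3,5))

lemma place_add:
  "place_on K L P \<Longrightarrow> a \<in> K \<Longrightarrow> b \<in> K \<Longrightarrow> P a = Some x \<Longrightarrow> P b = Some y \<Longrightarrow> P (a + b) = Some (x + y)"
  unfolding place_on_def by (elim conjE, drule bspec, assumption, drule bspec, assumption, drule spec, drule spec, drule mp, rule conjI, assumption, assumption, erule conjunct1)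

lemma place_mult:
  "place_on K L P \<Longrightarrow> a \<in> K \<Longrightarrow> b \<in> K \<Longrightarrow> P a = Some x \<Longrightarrow> P b = Some y \<Longrightarrow> P (a * b) = Some (x * y)"
  unfolding place_on_def by (elim conjE, drule bspec, assumption, drule bspec, assumption, drule spec, drule spec, drule mp, rule conjI, assumption, assumption, erule conjunct2)

lemma place_one: "place_on K L P \<Longrightarrow> P 1 = Some 1"
  unfolding place_on_def by (elim conjE)

lemma place_invax:
  "place_on K L P \<Longrightarrow> a \<in> K \<Longrightarrow> a \<noteq> 0 \<Longrightarrow> (P a = None \<longleftrightarrow> P (inverse a) = Some 0)"
  unfolding place_on_def by (elim conjE, drule bspec, assumption, erule mp, assumption)

lemma place_range: "place_on K L P \<Longrightarrow> a \<in> K \<Longrightarrow> P a = Some x \<Longrightarrow> x \<in> L"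
  unfolding place_on_def by (elim conjE, drule bspec, assumption, drule spec, erule mp, assumption)

lemma place_minus_one:
  assumes P: "place_on K L P" and K: "is_subfield K"
  shows "P (-1) = Some (-1)"
proof -
  have m1: "-1 \<in> K" using subfieldD[OF K] by blast
  have "P (-1) \<noteq> None"
    using place_invax[OF P m1] by auto
  then obtain m where m: "P (-1) = Some m" by auto
  have "P ((-1) * (-1)) = Some (m * m)" using place_mult[OF P m1 m1 m m] .
  then have mm: "m * m = 1" using place_one[OF P] by simp
  have "P (1 + -1) = Some (1 + m)" using place_add[OF P _ m1 place_one[OF P] m] subfieldD[OF K] by blast
  then have z: "P 0 = Some (1 + m)" by simp
  have "P (0 + 0) = Some ((1+m) + (1+m))" using place_add[OF P _ _ z z] subfieldD[OF K] by blast
  with z have "(1 + m) + (1 + m) = (1 + m) + 0" by simp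
  then have "1 + m = 0" by (simp only: add_left_cancel)
  then have "m = -1" by (simp add: eq_neg_iff_add_eq_0 add.commute)
  then show ?thesis using m by simp
qed

lemma place_zero:
  assumes P: "place_on K L P" and K: "is_subfield K"
  shows "P 0 = Some 0"
proof -
  have "P (1 + -1) = Some (1 + -1)"
    using place_add[OF P _ _ place_one[OF P] place_minus_one[OF P K]] subfieldD[OF K] by blast
  then show ?thesis by simp
qed

lemma place_neg:
  assumes P: "place_on K L P" and K: "is_subfield K" and a: "a \<in> K" "P a = Some x"
  shows "P (-a) = Some (-x)"
proof -
  have "P (-1 * a) = Some (-1 * x)"
    using place_mult[OF P _ a(1) place_minus_one[OF P K] a(2)] subfieldD[OF K] by blast
  then show ?thesis by simp
qed

lemma place_diff:
  assumes P: "place_on K L P" and K: "is_subfield K" and "a \<in> K" "b \<in> K" "P a = Some x" "P b = Some y"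
  shows "P (a - b) = Some (x - y)"
  using place_add[OF P assms(3) subfieldD(5)[OF K assms(4)] assms(5) place_neg[OF P K assms(4,6)]]
  by simp

lemma place_inv:
  assumes P: "place_on K L P" and K: "is_subfield K" and a: "a \<in> K" "P a = Some x" "x \<noteq> 0"
  shows "P (inverse a) = Some (inverse x)"
proof -
  have a0: "a \<noteq> 0" using a place_zero[OF P K] by auto
  have ia: "inverse a \<in> K" "inverse a \<noteq> 0" using subfieldD(6)[OF K a(1)] a0 by auto
  have "P (inverse a) \<noteq> None" using place_invax[OF P ia] a by simp
  then obtain z where z: "P (inverse a) = Some z" by auto
  have "P (a * inverse a) = Some (x * z)" using place_mult[OF P a(1) ia(1) a(2) z] .
  then have "x * z = 1" using a0 place_one[OF P] by simp
  then show ?thesis using z a(3) by (simp add: field_simps)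
qed

lemma place_inv0:
  assumes P: "place_on K L P" and K: "is_subfield K" and a: "a \<in> K" "P a = Some 0" "a \<noteq> 0"
  shows "P (inverse a) = None"
  using place_invax[OF P subfieldD(6)[OF K a(1)]] a by simp

lemma place_invN:
  assumes P: "place_on K L P" and a: "a \<in> K" "P a = None" "a \<noteq> 0"
  shows "P (inverse a) = Some 0"
  using place_invax[OF P a(1) a(3)] a by simp

lemma place_add_none:
  assumes P: "place_on K L P" and K: "is_subfield K" and "a \<in> K" "b \<in> K" "P a = Some x" "P b = None"
  shows "P (a + b) = None"
proof (rule ccontr)
  assume "P (a + b) \<noteq> None"
  then obtain z where z: "P (a + b) = Some z" by auto
  have "P ((a + b) - a) = Some (z - x)"
    by (rule place_diff[OF P K subfieldD(3)[OF K assms(3,4)] assms(3) z assms(5)])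
  then show False using assms(6) by simp
qed

lemma place_mult_none:
  assumes P: "place_on K L P" and K: "is_subfield K" and "a \<in> K" "b \<in> K" "P a = None" "P b = Some y" "y \<noteq> 0"
  shows "P (a * b) = None"
proof (rule ccontr)
  assume "P (a * b) \<noteq> None"
  then obtain z where z: "P (a * b) = Some z" by auto
  have b0: "b \<noteq> 0" using assms place_zero[OF P K] by auto
  have "P ((a * b) * inverse b) = Some (z * inverse y)"
    by (rule place_mult[OF P subfieldD(4)[OF K assms(3,4)] subfieldD(6)[OF K assms(4)] z place_inv[OF P K assms(4,6,7)]])
  then show False using assms(5) b0 by (simp add: mult.assoc)
qed

lemma comp_place_on:
  assumes P: "place_on UNIV Lset P" and Q: "place_on Lset UNIV Q" and L: "is_subfield Lset"
  shows "place_on UNIV UNIV (comp_place Q P)"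
  unfolding place_on_def
proof (intro conjI ballI allI impI)
  show "comp_place Q P 1 = Some 1"
    using place_one[OF P] place_one[OF Q] by (simp add: comp_place_def)
next
  fix a b x y assume h: "comp_place Q P a = Some x \<and> comp_place Q P b = Some y"
  then obtain g h' where g: "P a = Some g" "Q g = Some x" and hh: "P b = Some h'" "Q h' = Some y"
    by (auto simp: comp_place_def split: option.splits)
  have gL: "g \<in> Lset" "h' \<in> Lset" using place_range[OF P _ g(1)] place_range[OF P _ hh(1)] by auto
  show "comp_place Q P (a + b) = Some (x + y)"
    using place_add[OF P _ _ g(1) hh(1)] place_add[OF Q gL g(2) hh(2)] by (simp add: comp_place_def)
  show "comp_place Q P (a * b) = Some (x * y)"
    using place_mult[OF P _ _ g(1) hh(1)] place_mult[OF Q gL g(2) hh(2)] by (simp add: comp_place_def)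
next
  fix a :: 'a assume a0: "a \<noteq> 0"
  show "comp_place Q P a = None \<longleftrightarrow> comp_place Q P (inverse a) = Some 0"
  proof (cases "P a")
    case None
    then show ?thesis using place_invN[OF P _ None a0] place_zero[OF Q L]
      by (simp add: comp_place_def)
  next
    case (Some g)
    have gL: "g \<in> Lset" using place_range[OF P _ Some] by auto
    show ?thesis
    proof (cases "g = 0")
      case True
      then show ?thesis using place_inv0[OF P subfield_UNIV _ _ a0] Some place_zero[OF Q L]
        by (simp add: comp_place_def)
    next
      case False
      have "P (inverse a) = Some (inverse g)" using place_inv[OF P subfield_UNIV _ Some False] by simp
      then show ?thesis using place_invax[OF Q gL False] Some by (simp add: comp_place_def)
    qed
  qed
qed auto


locale gplace =
  fixes \<xi> :: "'f::field \<Rightarrow> real option"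
  assumes pl: "place_on UNIV UNIV \<xi>"
begin

definition \<phi> :: "'f \<Rightarrow> real" where "\<phi> c = the (\<xi> c)"
definition Oc :: "'f poly \<Rightarrow> bool" where "Oc p \<longleftrightarrow> (\<forall>i. \<xi> (coeff p i) \<noteq> None)"
definition red :: "'f poly \<Rightarrow> real poly" where "red p = map_poly \<phi> p"

lemma xi0: "\<xi> 0 = Some 0" using place_zero[OF pl subfield_UNIV] .
lemma xi1: "\<xi> 1 = Some 1" using place_one[OF pl] .
lemma phi0: "\<phi> 0 = 0" by (simp add: \<phi>_def xi0)
lemma phi1: "\<phi> 1 = 1" by (simp add: \<phi>_def xi1)

lemma fin_iff: "\<xi> a \<noteq> None \<longleftrightarrow> \<xi> a = Some (\<phi> a)"
  by (auto simp: \<phi>_def)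

lemma xi_add: "\<xi> a \<noteq> None \<Longrightarrow> \<xi> b \<noteq> None \<Longrightarrow> \<xi> (a + b) = Some (\<phi> a + \<phi> b)"
  using place_add[OF pl, of a b "\<phi> a" "\<phi> b"] fin_iff by auto
lemma xi_mult: "\<xi> a \<noteq> None \<Longrightarrow> \<xi> b \<noteq> None \<Longrightarrow> \<xi> (a * b) = Some (\<phi> a * \<phi> b)"
  using place_mult[OF pl, of a b "\<phi> a" "\<phi> b"] fin_iff by auto
lemma phi_add: "\<xi> a \<noteq> None \<Longrightarrow> \<xi> b \<noteq> None \<Longrightarrow> \<phi> (a + b) = \<phi> a + \<phi> b"
  using xi_add by (simp add: \<phi>_def)
lemma phi_mult: "\<xi> a \<noteq> None \<Longrightarrow> \<xi> b \<noteq> None \<Longrightarrow> \<phi> (a * b) = \<phi> a * \<phi> b"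
  using xi_mult by (simp add: \<phi>_def)

lemma xi_sum:
  assumes "finite S" "\<forall>i\<in>S. \<xi> (g i) \<noteq> None"
  shows "\<xi> (sum g S) = Some (\<Sum>i\<in>S. \<phi> (g i))"
  using assms
proof (induction S rule: finite_induct)
  case empty then show ?case by (simp add: xi0)
next
  case (insert x F)
  then have "\<xi> (sum g F) \<noteq> None" by simp
  then show ?case using insert xi_add[of "g x" "sum g F"] by (simp add: \<phi>_def)
qed

lemma coeff_red: "coeff (red p) i = \<phi> (coeff p i)"
  by (simp add: red_def coeff_map_poly phi0)

lemma Oc_0: "Oc 0" by (simp add: Oc_def xi0)
lemma Oc_1: "Oc 1" by (simp add: Oc_def coeff_1 xi0 xi1)
lemma Oc_add: "Oc p \<Longrightarrow> Oc q \<Longrightarrow> Oc (p + q)"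
  by (simp add: Oc_def xi_add)
lemma Oc_mult: assumes "Oc p" "Oc q" shows "Oc (p * q)"
  unfolding Oc_def coeff_mult
proof
  fix n
  have "\<xi> (\<Sum>i\<le>n. coeff p i * coeff q (n - i)) = Some (\<Sum>i\<le>n. \<phi> (coeff p i * coeff q (n - i)))"
    by (rule xi_sum) (use assms in \<open>auto simp: Oc_def xi_mult\<close>)
  then show "\<xi> (\<Sum>i\<le>n. coeff p i * coeff q (n - i)) \<noteq> None" by simp
qed
lemma Oc_smult: "\<xi> c \<noteq> None \<Longrightarrow> Oc p \<Longrightarrow> Oc (smult c p)"
  by (simp add: Oc_def xi_mult)

lemma red_add: "Oc p \<Longrightarrow> Oc q \<Longrightarrow> red (p + q) = red p + red q"
  by (simp add: poly_eq_iff coeff_red Oc_def phi_add)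
lemma red_mult: "Oc p \<Longrightarrow> Oc q \<Longrightarrow> red (p * q) = red p * red q"
proof -
  assume "Oc p" "Oc q"
  then have h: "\<And>i j. \<xi> (coeff p i * coeff q j) \<noteq> None" using xi_mult Oc_def by simp
  show ?thesis unfolding poly_eq_iff coeff_red coeff_mult
  proof
    fix n
    have "\<xi> (\<Sum>i\<le>n. coeff p i * coeff q (n - i)) = Some (\<Sum>i\<le>n. \<phi> (coeff p i * coeff q (n - i)))"
      by (rule xi_sum) (use h in auto)
    then have "\<phi> (\<Sum>i\<le>n. coeff p i * coeff q (n - i)) = (\<Sum>i\<le>n. \<phi> (coeff p i * coeff q (n - i)))"
      by (simp add: \<phi>_def)
    also have "\<dots> = (\<Sum>i\<le>n. \<phi> (coeff p i) * \<phi> (coeff q (n - i)))"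
      using \<open>Oc p\<close> \<open>Oc q\<close> by (simp add: Oc_def phi_mult)
    finally show "\<phi> (\<Sum>i\<le>n. coeff p i * coeff q (n - i)) = (\<Sum>i\<le>n. \<phi> (coeff p i) * \<phi> (coeff q (n - i)))" .
  qed
qed
lemma red_smult: "\<xi> c \<noteq> None \<Longrightarrow> Oc p \<Longrightarrow> red (smult c p) = smult (\<phi> c) (red p)"
  by (simp add: poly_eq_iff coeff_red Oc_def phi_mult)
lemma red_1: "red 1 = 1" by (simp add: red_def phi1)
lemma red_0: "red 0 = 0" by (simp add: red_def)

lemma inv_fin:
  assumes "a \<noteq> 0" "\<xi> a = None" shows "\<xi> (inverse a) = Some 0"
  using place_invN[OF pl _ assms(2,1)] by simp

lemma max_elem:
  assumes "finite S" "S \<noteq> {}" "0 \<notin> S"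
  shows "\<exists>m\<in>S. \<forall>s\<in>S. \<xi> (s / m) \<noteq> None"
  using assms
proof (induction S rule: finite_ne_induct)
  case (singleton x)
  then show ?case by (simp add: xi1)
next
  case (insert x F)
  then obtain m where m: "m \<in> F" "\<forall>s\<in>F. \<xi> (s / m) \<noteq> None" by auto
  have x0: "x \<noteq> 0" and m0: "m \<noteq> 0" using insert m by auto
  show ?case
  proof (cases "\<xi> (x / m) = None")
    case False
    then show ?thesis using m by auto
  next
    case True
    have "\<xi> (inverse (x / m)) = Some 0" using inv_fin[OF _ True] x0 m0 by simp
    then have mx: "\<xi> (m / x) = Some 0" by simp
    have "\<forall>s\<in>insert x F. \<xi> (s / x) \<noteq> None"
    proof
      fix s assume "s \<in> insert x F"
      then consider "s = x" | "s \<in> F" by auto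
      then show "\<xi> (s / x) \<noteq> None"
      proof cases
        case 1 then show ?thesis using x0 by (simp add: xi1)
      next
        case 2
        have e: "s / x = (s / m) * (m / x)" using m0 by simp
        have "\<xi> ((s / m) * (m / x)) = Some (\<phi> (s / m) * \<phi> (m / x))"
          using m(2) 2 mx by (intro xi_mult) auto
        then show ?thesis by (simp only: e) simp
      qed
    qed
    then show ?thesis by auto
  qed
qed

lemma norm_poly:
  assumes "p \<noteq> 0"
  shows "\<exists>c P0. c \<noteq> 0 \<and> p = smult c P0 \<and> Oc P0 \<and> red P0 \<noteq> 0"
proof -
  define S where "S = {coeff p i | i. coeff p i \<noteq> 0}"
  have "S \<subseteq> (\<lambda>i. coeff p i) ` {..degree p}"
    unfolding S_def using le_degree by fastforce
  then have fin: "finite S" using finite_subset by blast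
  have ne: "S \<noteq> {}" unfolding S_def using assms by (metis (mono_tags, lifting) empty_Collect_eq leading_coeff_0_iff)
  obtain m where m: "m \<in> S" "\<forall>s\<in>S. \<xi> (s / m) \<noteq> None"
    using max_elem[OF fin ne] S_def by auto
  obtain i0 where i0: "coeff p i0 = m" "m \<noteq> 0" using m(1) S_def by auto
  define P0 where "P0 = smult (inverse m) p"
  have "p = smult m P0" using i0 by (simp add: P0_def)
  moreover have "Oc P0"
    unfolding Oc_def P0_def
  proof
    fix i
    show "\<xi> (coeff (smult (inverse m) p) i) \<noteq> None"
    proof (cases "coeff p i = 0")
      case True then show ?thesis by (simp add: xi0)
    next
      case False
      then have "coeff p i \<in> S" using S_def by auto
      then show ?thesis using m(2) by (simp add: field_simps)
    qed
  qed
  moreover have "red P0 \<noteq> 0"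
  proof -
    have "coeff (red P0) i0 = 1" using i0 by (simp add: coeff_red P0_def phi1)
    then show ?thesis by auto
  qed
  ultimately show ?thesis using i0 by blast
qed

definition goodrep :: "'f poly fract \<Rightarrow> 'f poly \<Rightarrow> 'f poly \<Rightarrow> bool" where
  "goodrep f A B \<longleftrightarrow> f = Fract A B \<and> Oc A \<and> Oc B \<and> red B \<noteq> 0"

definition gauss :: "'f poly fract \<Rightarrow> real poly fract option" where
  "gauss f = (if \<exists>A B. goodrep f A B then
     Some (let AB = (SOME AB. goodrep f (fst AB) (snd AB)) in Fract (red (fst AB)) (red (snd AB)))
   else None)"

lemma goodrep_B0: "goodrep f A B \<Longrightarrow> B \<noteq> 0"
  by (auto simp: goodrep_def red_0)

lemma goodrep_wd:
  assumes "goodrep f A B" "goodrep f A' B'"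
  shows "Fract (red A) (red B) = Fract (red A') (red B')"
proof -
  have B: "B \<noteq> 0" "B' \<noteq> 0" using goodrep_B0 assms by auto
  have "Fract A B = Fract A' B'" using assms by (simp add: goodrep_def)
  then have "A * B' = A' * B" using B by (simp add: eq_fract)
  then have "red (A * B') = red (A' * B)" by simp
  then have "red A * red B' = red A' * red B" using assms by (simp add: goodrep_def red_mult)
  then show ?thesis using assms by (simp add: goodrep_def eq_fract)
qed

lemma gauss_eq:
  assumes "goodrep f A B"
  shows "gauss f = Some (Fract (red A) (red B))"
proof -
  have ex: "\<exists>AB. goodrep f (fst AB) (snd AB)" using assms by auto
  define AB where "AB = (SOME AB. goodrep f (fst AB) (snd AB))"
  have g: "goodrep f (fst AB) (snd AB)" using someI_ex[OF ex] unfolding AB_def .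
  have "gauss f = Some (Fract (red (fst AB)) (red (snd AB)))"
    unfolding gauss_def Let_def AB_def[symmetric] using assms by auto
  also have "\<dots> = Some (Fract (red A) (red B))" using goodrep_wd[OF g assms] by simp
  finally show ?thesis .
qed

lemma gauss_None: "\<not> (\<exists>A B. goodrep f A B) \<Longrightarrow> gauss f = None"
  by (simp add: gauss_def)

lemma gauss_cases:
  "(\<exists>A B. goodrep f A B) \<or> (f \<noteq> 0 \<and> (\<exists>A B. goodrep (inverse f) A B \<and> red A = 0))"
proof (cases f)
  case (Fract p q)
  show ?thesis
  proof (cases "p = 0")
    case True
    then have "goodrep f 0 1" using Fract by (simp add: goodrep_def Oc_0 Oc_1 red_1 eq_fract)
    then show ?thesis by blast
  next
    case False
    obtain c P0 where c: "c \<noteq> 0" "p = smult c P0" "Oc P0" "red P0 \<noteq> 0" using norm_poly[OF False] by blast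
    obtain d Q0 where d: "d \<noteq> 0" "q = smult d Q0" "Oc Q0" "red Q0 \<noteq> 0" using norm_poly[OF Fract(2)] by blast
    have P00: "P0 \<noteq> 0" "Q0 \<noteq> 0" using c d by (auto simp: red_0)
    show ?thesis
    proof (cases "\<xi> (c / d) = None")
      case False
      have "f = Fract (smult (c / d) P0) Q0"
        using Fract c d P00 by (simp add: eq_fract)
      then have "goodrep f (smult (c / d) P0) Q0"
        using False c d by (simp add: goodrep_def Oc_smult)
      then show ?thesis by blast
    next
      case True
      have "\<xi> (inverse (c / d)) = Some 0" using inv_fin[OF _ True] c d by simp
      then have dc: "\<xi> (d / c) = Some 0" by simp
      have "inverse f = Fract (smult (d / c) Q0) P0"
        using Fract c d P00 by (simp add: eq_fract)
      moreover have "red (smult (d / c) Q0) = 0"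
        using dc d by (simp add: red_smult \<phi>_def)
      moreover have "f \<noteq> 0" using Fract False by (simp add: eq_fract Zero_fract_def)
      ultimately show ?thesis using dc d c
        by (metis Oc_smult goodrep_def option.distinct(1))
    qed
  qed
qed

lemma no_both:
  assumes "f \<noteq> 0" "goodrep f A B" "goodrep (inverse f) A' B'" "red A' = 0"
  shows False
proof -
  have B: "B \<noteq> 0" "B' \<noteq> 0" using goodrep_B0 assms by auto
  have "f * inverse f = 1" using assms(1) by simp
  moreover have fA: "f = Fract A B" "inverse f = Fract A' B'" using assms(2,3) by (auto simp: goodrep_def)
  ultimately have "Fract (A * A') (B * B') = Fract 1 1" unfolding fract_collapse(2) by (metis mult_fract)
  then have "A * A' = B * B'" using B by (simp add: eq_fract)
  then have "red (A * A') = red (B * B')" by simp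
  then have "red A * red A' = red B * red B'" using assms by (simp add: goodrep_def red_mult)
  then show False using assms by (simp add: goodrep_def)
qed

end

context gplace begin

lemma residue_subfield: "is_subfield (residue_field \<xi>)"
proof -
  have z: "0 \<in> residue_field \<xi>" "1 \<in> residue_field \<xi>"
    unfolding residue_field_def using xi0 xi1 by blast+
  have ad: "a + b \<in> residue_field \<xi> \<and> a * b \<in> residue_field \<xi>"
    if H: "a \<in> residue_field \<xi>" "b \<in> residue_field \<xi>" for a b
  proof -
    obtain x y where xy: "\<xi> x = Some a" "\<xi> y = Some b" using H unfolding residue_field_def by auto
    show ?thesis using place_add[OF pl _ _ xy] place_mult[OF pl _ _ xy] unfolding residue_field_def by blast
  qed
  have ng: "- a \<in> residue_field \<xi>" if H: "a \<in> residue_field \<xi>" for a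
  proof -
    obtain x where x: "\<xi> x = Some a" using H unfolding residue_field_def by auto
    show ?thesis using place_neg[OF pl subfield_UNIV _ x] unfolding residue_field_def by blast
  qed
  have iv: "inverse a \<in> residue_field \<xi>" if H: "a \<in> residue_field \<xi>" "a \<noteq> 0" for a
  proof -
    obtain x where x: "\<xi> x = Some a" using H unfolding residue_field_def by auto
    show ?thesis using place_inv[OF pl subfield_UNIV _ x H(2)] unfolding residue_field_def by blast
  qed
  show ?thesis unfolding is_subfield_def using z ad ng iv by blast
qed

lemma red_in: "Oc A \<Longrightarrow> coeff (red A) i \<in> residue_field \<xi>"
  unfolding coeff_red residue_field_def Oc_def using fin_iff by blast

lemma gauss_Some: "gauss f = Some x \<Longrightarrow> \<exists>A B. goodrep f A B \<and> x = Fract (red A) (red B)"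
  by (metis gauss_None gauss_eq option.distinct(1) option.inject)

lemma goodrep_add:
  assumes "goodrep f A B" "goodrep g C D"
  shows "goodrep (f + g) (A * D + C * B) (B * D)"
  using assms goodrep_B0[OF assms(1)] goodrep_B0[OF assms(2)]
  by (auto simp: goodrep_def Oc_add Oc_mult red_mult)

lemma goodrep_mult:
  assumes "goodrep f A B" "goodrep g C D"
  shows "goodrep (f * g) (A * C) (B * D)"
  using assms
  by (auto simp: goodrep_def Oc_mult red_mult)

lemma gauss_place: "place_on UNIV (ratfun (residue_field \<xi>)) gauss"
  unfolding place_on_def
proof (intro conjI ballI allI impI)
  fix a x assume "gauss a = Some x"
  then obtain A B where "goodrep a A B" "x = Fract (red A) (red B)" using gauss_Some by blast
  then show "x \<in> ratfun (residue_field \<xi>)"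
    unfolding ratfun_def goodrep_def using red_in by blast
next
  have "goodrep 1 1 1" by (simp add: goodrep_def Oc_1 red_1 fract_collapse)
  then show "gauss 1 = Some 1" using gauss_eq by (simp add: red_1 fract_collapse)
next
  fix a b x y assume h: "gauss a = Some x \<and> gauss b = Some y"
  then obtain A B C D where r: "goodrep a A B" "x = Fract (red A) (red B)"
    "goodrep b C D" "y = Fract (red C) (red D)" using gauss_Some by meson
  have B0: "red B \<noteq> 0" "red D \<noteq> 0" "B \<noteq> 0" "D \<noteq> 0"
    using r goodrep_B0 by (auto simp: goodrep_def)
  have O: "Oc A" "Oc B" "Oc C" "Oc D" using r by (auto simp: goodrep_def)
  show "gauss (a + b) = Some (x + y)"
    using gauss_eq[OF goodrep_add[OF r(1,3)]] r B0 O by (simp add: red_add red_mult Oc_mult)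
  show "gauss (a * b) = Some (x * y)"
    using gauss_eq[OF goodrep_mult[OF r(1,3)]] r B0 O by (simp add: red_mult)
next
  fix a :: "'f poly fract" assume a0: "a \<noteq> 0"
  show "gauss a = None \<longleftrightarrow> gauss (inverse a) = Some 0"
  proof
    assume "gauss a = None"
    then have "\<not> (\<exists>A B. goodrep a A B)" using gauss_eq by fastforce
    then obtain A B where "goodrep (inverse a) A B" "red A = 0" using gauss_cases[of a] by blast
    then show "gauss (inverse a) = Some 0" using gauss_eq by (simp add: fract_collapse)
  next
    assume "gauss (inverse a) = Some 0"
    then obtain A B where r: "goodrep (inverse a) A B" "0 = Fract (red A) (red B)" using gauss_Some by blast
    then have "red A = 0" by (auto simp: goodrep_def eq_fract Zero_fract_def)
    then have "\<not> (\<exists>A' B'. goodrep a A' B')" using no_both[OF a0 _ r(1)] by blast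
    then show "gauss a = None" by (rule gauss_None)
  qed
qed

lemma red_eq: "map_poly (\<lambda>c. the (\<xi> c)) p = red p"
  by (simp add: red_def \<phi>_def[abs_def])

lemma gauss_spec: "(\<forall>i. \<xi> (coeff p i) \<noteq> None) \<Longrightarrow> gauss (Fract p 1) = Some (Fract (red p) 1)"
  using gauss_eq[of "Fract p 1" p 1] by (simp add: goodrep_def Oc_def Oc_1 red_1 coeff_1 xi0 xi1)

lemma gauss_ext_eq: "gauss_ext \<xi> = gauss"
  unfolding gauss_ext_def
proof (rule the_equality)
  show "place_on UNIV (ratfun (residue_field \<xi>)) gauss \<and>
    (\<forall>p. (\<forall>i. \<xi> (coeff p i) \<noteq> None) \<longrightarrow> gauss (Fract p 1) = Some (Fract (map_poly (\<lambda>c. the (\<xi> c)) p) 1))"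
    using gauss_place gauss_spec red_eq by simp
next
  fix P assume h: "place_on UNIV (ratfun (residue_field \<xi>)) P \<and>
    (\<forall>p. (\<forall>i. \<xi> (coeff p i) \<noteq> None) \<longrightarrow> P (Fract p 1) = Some (Fract (map_poly (\<lambda>c. the (\<xi> c)) p) 1))"
  then have P: "place_on UNIV (ratfun (residue_field \<xi>)) P" by blast
  have sp: "Oc p \<Longrightarrow> P (Fract p 1) = Some (Fract (red p) 1)" for p
    using h red_eq by (simp add: Oc_def)
  have good: "P f = Some (Fract (red A) (red B))" if g: "goodrep f A B" for f A B
  proof -
    have O: "Oc A" "Oc B" "red B \<noteq> 0" "B \<noteq> 0" using g goodrep_B0 by (auto simp: goodrep_def)
    have nz: "Fract (red B) 1 \<noteq> 0" using O by (simp add: eq_fract Zero_fract_def)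
    have "P (inverse (Fract B 1)) = Some (inverse (Fract (red B) 1))"
      using place_inv[OF P subfield_UNIV _ sp[OF O(2)] nz] by simp
    then have "P (Fract A 1 * inverse (Fract B 1)) = Some (Fract (red A) 1 * inverse (Fract (red B) 1))"
      by (intro place_mult[OF P _ _ sp[OF O(1)]]) auto
    then show ?thesis using g by (simp add: goodrep_def)
  qed
  show "P = gauss"
  proof
    fix f
    show "P f = gauss f"
    proof (cases "\<exists>A B. goodrep f A B")
      case True
      then obtain A B where "goodrep f A B" by blast
      then show ?thesis using good gauss_eq by simp
    next
      case False
      then obtain A B where r: "f \<noteq> 0" "goodrep (inverse f) A B" "red A = 0" using gauss_cases[of f] by blast
      have "P (inverse f) = Some 0" using good[OF r(2)] r(3) by (simp add: fract_collapse)
      then have "P f = None" using place_invax[OF P _ r(1)] by simp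
      then show ?thesis using gauss_None[OF False] by simp
    qed
  qed
qed

end

definition Sp :: "real set \<Rightarrow> real poly \<Rightarrow> bool" where
  "Sp S p \<longleftrightarrow> (\<forall>i. coeff p i \<in> S)"

definition Fp :: "real poly \<Rightarrow> real poly fract" where "Fp p = Fract p 1"

lemma subfield_sum: assumes "is_subfield S" "finite I" "\<forall>i\<in>I. g i \<in> S" shows "sum g I \<in> S"
  using assms(2,3) by (induction I rule: finite_induct) (auto intro: subfieldD[OF assms(1)])

lemma subfield_divide: "is_subfield S \<Longrightarrow> a \<in> S \<Longrightarrow> b \<in> S \<Longrightarrow> a / b \<in> S"
  by (simp add: divide_inverse subfieldD)

context fixes S :: "real set" assumes S: "is_subfield S"
begin

lemma Sp_0: "Sp S 0" using S by (simp add: Sp_def subfieldD)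
lemma Sp_1: "Sp S 1" using S by (simp add: Sp_def coeff_1 subfieldD)
lemma Sp_const: "c \<in> S \<Longrightarrow> Sp S [:c:]" using S by (simp add: Sp_def coeff_pCons split: nat.split add: subfieldD)
lemma Sp_X: "Sp S [:0, 1:]" using S by (simp add: Sp_def coeff_pCons split: nat.split add: subfieldD)
lemma Sp_add: "Sp S p \<Longrightarrow> Sp S q \<Longrightarrow> Sp S (p + q)" using S by (simp add: Sp_def subfieldD)
lemma Sp_diff: "Sp S p \<Longrightarrow> Sp S q \<Longrightarrow> Sp S (p - q)" using S by (simp add: Sp_def subfield_diff)
lemma Sp_neg: "Sp S p \<Longrightarrow> Sp S (- p)" using S by (simp add: Sp_def subfieldD)
lemma Sp_mult: "Sp S p \<Longrightarrow> Sp S q \<Longrightarrow> Sp S (p * q)"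
  unfolding Sp_def coeff_mult by (intro allI subfield_sum[OF S]) (auto intro: subfieldD[OF S])
lemma Sp_smult: "c \<in> S \<Longrightarrow> Sp S p \<Longrightarrow> Sp S (smult c p)" using S by (simp add: Sp_def subfieldD)
lemma Sp_monom: "c \<in> S \<Longrightarrow> Sp S (monom c n)" using S by (simp add: Sp_def coeff_monom subfieldD)
lemma Sp_pCons: "Sp S (pCons c p) \<Longrightarrow> c \<in> S \<and> Sp S p"
  unfolding Sp_def by (metis coeff_pCons_0 coeff_pCons_Suc)
lemma Sp_lead: "Sp S p \<Longrightarrow> lead_coeff p \<in> S" by (simp add: Sp_def)

lemma ratfun_Fract: "Sp S p \<Longrightarrow> Sp S q \<Longrightarrow> q \<noteq> 0 \<Longrightarrow> Fract p q \<in> ratfun S"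
  unfolding ratfun_def Sp_def by blast

lemma ratfun_cases:
  assumes "f \<in> ratfun S" obtains p q where "f = Fract p q" "q \<noteq> 0" "Sp S p" "Sp S q"
  using assms unfolding ratfun_def Sp_def by blast

lemma ratfun_subfield: "is_subfield (ratfun S)"
proof -
  have z: "0 \<in> ratfun S" "1 \<in> ratfun S"
    using ratfun_Fract[OF Sp_0 Sp_1] ratfun_Fract[OF Sp_1 Sp_1] by (auto simp: fract_collapse)
  have ad: "f + g \<in> ratfun S \<and> f * g \<in> ratfun S" if H: "f \<in> ratfun S" "g \<in> ratfun S" for f g
  proof -
    obtain p q where pq: "f = Fract p q" "q \<noteq> 0" "Sp S p" "Sp S q" using H(1) by (rule ratfun_cases)
    obtain r s where rs: "g = Fract r s" "s \<noteq> 0" "Sp S r" "Sp S s" using H(2) by (rule ratfun_cases)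
    show ?thesis using pq rs
      by (auto intro!: ratfun_Fract Sp_add Sp_mult)
  qed
  have ng: "- f \<in> ratfun S" if H: "f \<in> ratfun S" for f
  proof -
    obtain p q where pq: "f = Fract p q" "q \<noteq> 0" "Sp S p" "Sp S q" using H by (rule ratfun_cases)
    show ?thesis using pq by (auto intro!: ratfun_Fract Sp_neg)
  qed
  have iv: "inverse f \<in> ratfun S" if H: "f \<in> ratfun S" for f
  proof -
    obtain p q where pq: "f = Fract p q" "q \<noteq> 0" "Sp S p" "Sp S q" using H by (rule ratfun_cases)
    show ?thesis
    proof (cases "p = 0")
      case True then show ?thesis using pq z by (simp add: fract_collapse)
    next
      case False then show ?thesis using pq by (auto intro!: ratfun_Fract)
    qed
  qed
  show ?thesis unfolding is_subfield_def using z ad ng iv by blast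
qed

lemma Fp_in: "Sp S p \<Longrightarrow> Fp p \<in> ratfun S"
  unfolding Fp_def using ratfun_Fract Sp_1 by simp

lemma cst_in: "c \<in> S \<Longrightarrow> cst c \<in> ratfun S"
  unfolding cst_def using ratfun_Fract Sp_1 Sp_const by simp

lemma yvar_in: "yvar \<in> ratfun S"
  unfolding yvar_def using ratfun_Fract Sp_1 Sp_X by simp

end

lemma Fp_add: "Fp (p + q) = Fp p + Fp q" by (simp add: Fp_def)
lemma Fp_mult: "Fp (p * q) = Fp p * Fp q" by (simp add: Fp_def)
lemma Fp_1: "Fp 1 = 1" by (simp add: Fp_def fract_collapse)
lemma Fp_0: "Fp 0 = 0" by (simp add: Fp_def fract_collapse)
lemma Fp_const: "Fp [:c:] = cst c" by (simp add: Fp_def cst_def)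
lemma Fp_X: "Fp [:0, 1:] = yvar" by (simp add: Fp_def yvar_def)
lemma Fp_eq0: "Fp p = 0 \<longleftrightarrow> p = 0" by (simp add: Fp_def eq_fract Zero_fract_def)
lemma Fract_Fp: "Fract p q = Fp p * inverse (Fp q)" by (simp add: Fp_def)
lemma Fp_pCons: "Fp (pCons c p) = cst c + yvar * Fp p"
proof -
  have h: "pCons c p = [:c:] + [:0, 1:] * p" by (simp add: mult_pCons_left)
  show ?thesis unfolding h by (simp only: Fp_add Fp_mult Fp_const Fp_X)
qed
lemma Fp_pow: "Fp (p ^ n) = Fp p ^ n" by (induction n) (simp_all add: Fp_1 Fp_mult)
lemma Fp_monom: "Fp (monom c n) = cst c * yvar ^ n"
proof -
  have h: "monom c n = [:c:] * [:0, 1:] ^ n" by (simp add: monom_altdef)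
  show ?thesis unfolding h by (simp only: Fp_mult Fp_pow Fp_const Fp_X)
qed
lemma yvar_nz: "yvar \<noteq> (0 :: real poly fract)" using Fp_eq0[of "[:0,1:]"] Fp_X by simp


lemma subfield_pow: "is_subfield K \<Longrightarrow> a \<in> K \<Longrightarrow> a ^ n \<in> K"
  by (induction n) (auto intro: subfieldD)

lemma sdiv:
  assumes S: "is_subfield S" and q: "Sp S q" "q \<noteq> 0"
  shows "Sp S p \<Longrightarrow> \<exists>s r. Sp S s \<and> Sp S r \<and> p = s * q + r \<and> (r = 0 \<or> degree r < degree q)"
proof (induction "degree p" arbitrary: p rule: less_induct)
  case less
  show ?case
  proof (cases "p = 0 \<or> degree p < degree q")
    case True
    then show ?thesis using less.prems Sp_0[OF S] by (intro exI[of _ 0] exI[of _ p]) auto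
  next
    case False
    then have p0: "p \<noteq> 0" and dd: "degree q \<le> degree p" by auto
    define c where "c = lead_coeff p / lead_coeff q"
    define t where "t = monom c (degree p - degree q)"
    have c0: "c \<noteq> 0" using p0 q by (simp add: c_def)
    have cS: "c \<in> S" unfolding c_def using subfield_divide[OF S] Sp_lead[OF S] less.prems q by blast
    have tS: "Sp S t" unfolding t_def using Sp_monom[OF S cS] .
    have t0: "t \<noteq> 0" using c0 by (simp add: t_def)
    have "degree t = degree p - degree q" using c0 by (simp add: t_def degree_monom_eq)
    then have dtq: "degree (t * q) = degree p" using degree_mult_eq[OF t0 q(2)] dd by simp
    have ltq: "lead_coeff (t * q) = lead_coeff p" using q(2)
      unfolding lead_coeff_mult t_def lead_coeff_monom c_def by simp
    define p' where "p' = p - t * q"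
    have p'S: "Sp S p'" unfolding p'_def using Sp_diff[OF S less.prems Sp_mult[OF S tS q(1)]] .
    have deg': "p' = 0 \<or> degree p' < degree p"
    proof (cases "p' = 0")
      case False
      have "degree p' \<le> degree p" unfolding p'_def using dtq by (intro degree_diff_le) auto
      moreover have "coeff p' (degree p) = 0" unfolding p'_def using dtq ltq by simp
      ultimately show ?thesis using degree_less_if_less_eqI[of p' p] False by simp
    qed simp
    show ?thesis
    proof (cases "p' = 0")
      case True
      then have "p = t * q + 0" by (simp add: p'_def)
      then show ?thesis using tS Sp_0[OF S] by blast
    next
      case False
      then obtain s r where sr: "Sp S s" "Sp S r" "p' = s * q + r" "r = 0 \<or> degree r < degree q"
        using less.hyps[of p'] deg' p'S by blast
      have "p = (s + t) * q + r" using sr(3) by (simp add: p'_def algebra_simps)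
      then show ?thesis using sr Sp_add[OF S sr(1) tS] by blast
    qed
  qed
qed

locale Splace =
  fixes S :: "real set" and Q :: "real poly fract \<Rightarrow> real option"
  assumes S: "is_subfield S" and Qp: "place_on (ratfun S) UNIV Q" and Qc: "\<forall>c\<in>S. Q (cst c) = Some c"
begin

lemma RS: "is_subfield (ratfun S)" using ratfun_subfield[OF S] .

lemma Q_Fp_fin:
  assumes a: "Q yvar = Some a"
  shows "Sp S p \<Longrightarrow> Q (Fp p) = Some (poly p a)"
proof (induction p rule: pCons_induct)
  case 0
  then show ?case using place_zero[OF Qp RS] by (simp add: Fp_0)
next
  case (pCons c p)
  have cp: "c \<in> S" "Sp S p" using Sp_pCons[OF S pCons.prems] by blast+
  have "Q (yvar * Fp p) = Some (a * poly p a)"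
    using place_mult[OF Qp yvar_in[OF S] Fp_in[OF S cp(2)] a pCons.IH[OF cp(2)]] .
  then have "Q (cst c + yvar * Fp p) = Some (c + a * poly p a)"
    using place_add[OF Qp cst_in[OF S cp(1)] subfieldD(4)[OF RS yvar_in[OF S] Fp_in[OF S cp(2)]]] Qc cp(1)
    by simp
  then show ?case by (simp add: Fp_pCons)
qed

context
  assumes inf: "Q yvar = None"
begin

definition zz :: "real poly fract" where "zz = inverse yvar"

lemma zz_in: "zz \<in> ratfun S" unfolding zz_def using subfieldD(6)[OF RS yvar_in[OF S]] .
lemma zz0: "Q zz = Some 0" unfolding zz_def using place_invN[OF Qp yvar_in[OF S] inf yvar_nz] .
lemma zz_nz: "zz \<noteq> 0" unfolding zz_def using yvar_nz by simp
lemma zzpow: "Q (zz ^ k) = Some (0 ^ k)"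
proof (induction k)
  case 0 then show ?case using place_one[OF Qp] by simp
next
  case (Suc k)
  then show ?case using place_mult[OF Qp zz_in subfield_pow[OF RS zz_in] zz0 Suc] by simp
qed
lemma zzpow_in: "zz ^ k \<in> ratfun S" using subfield_pow[OF RS zz_in] .

lemma Q_inf_lead: "Sp S p \<Longrightarrow> Q (Fp p * zz ^ degree p) = Some (lead_coeff p)"
proof (induction "degree p" arbitrary: p rule: less_induct)
  case less
  show ?case
  proof (cases "degree p = 0")
    case True
    have "p = [:coeff p 0:]" using degree_0_id[OF True] by (rule sym)
    then have "Fp p = cst (coeff p 0)" using Fp_const by metis
    then show ?thesis using True Qc less.prems by (simp add: Sp_def)
  next
    case False
    define n where "n = degree p"
    define c where "c = lead_coeff p"
    define q where "q = p - monom c n"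
    have cS: "c \<in> S" using less.prems by (simp add: c_def Sp_def)
    have qS: "Sp S q" unfolding q_def using Sp_diff[OF S less.prems Sp_monom[OF S cS]] .
    have pq: "p = monom c n + q" by (simp add: q_def)
    have qdeg: "q = 0 \<or> degree q < n"
    proof (cases "q = 0")
      case False
      have "degree q \<le> n" unfolding q_def n_def by (intro degree_diff_le) (auto simp: degree_monom_le)
      moreover have "coeff q n = 0" by (simp add: q_def n_def c_def)
      ultimately show ?thesis using degree_less_if_less_eqI[of q p] False n_def by simp
    qed simp
    have yz: "yvar * zz = 1" unfolding zz_def using yvar_nz by simp
    have e1: "Fp (monom c n) * zz ^ n = cst c"
      by (simp add: Fp_monom mult.assoc power_mult_distrib[symmetric] yz mult.commute[of "yvar ^ n"])
    have Qq: "Q (Fp q * zz ^ n) = Some 0"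
    proof (cases "q = 0")
      case True
      then show ?thesis using place_zero[OF Qp RS] by (simp add: Fp_0)
    next
      case False
      then have dq: "degree q < n" using qdeg by simp
      have IH: "Q (Fp q * zz ^ degree q) = Some (lead_coeff q)"
        using less.hyps[OF _ qS] dq n_def by simp
      have "zz ^ n = zz ^ degree q * zz ^ (n - degree q)" using dq by (simp add: power_add[symmetric])
      then have e: "Fp q * zz ^ n = (Fp q * zz ^ degree q) * zz ^ (n - degree q)" by (simp add: mult.assoc)
      have "Q (Fp q * zz ^ n) = Some (lead_coeff q * 0 ^ (n - degree q))"
        unfolding e by (rule place_mult[OF Qp subfieldD(4)[OF RS Fp_in[OF S qS] zzpow_in] zzpow_in IH zzpow])
      moreover have "lead_coeff q * 0 ^ (n - degree q) = (0::real)" using dq by simp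
      ultimately show ?thesis by (simp only:)
    qed
    have "Fp p * zz ^ n = cst c + Fp q * zz ^ n"
      using e1 by (simp add: pq Fp_add distrib_right)
    moreover have "Q (cst c + Fp q * zz ^ n) = Some (c + 0)"
      by (rule place_add[OF Qp cst_in[OF S cS] subfieldD(4)[OF RS Fp_in[OF S qS] zzpow_in] _ Qq])
         (use Qc cS in simp)
    ultimately show ?thesis by (simp add: n_def c_def)
  qed
qed

lemma Q_inf_val:
  assumes p: "Sp S p" and q: "Sp S q" "q \<noteq> 0"
  shows "Q (Fract p q) = (if degree p \<le> degree q then
     Some (if degree p = degree q then lead_coeff p / lead_coeff q else 0) else None)"
proof (cases "p = 0")
  case True
  then show ?thesis using place_zero[OF Qp RS] by (simp add: fract_collapse)
next
  case False
  define A where "A = Fp p * zz ^ degree p"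
  define B where "B = Fp q * zz ^ degree q"
  have AB: "A \<in> ratfun S" "B \<in> ratfun S"
    unfolding A_def B_def using Fp_in[OF S p] Fp_in[OF S q(1)] zzpow_in subfieldD(4)[OF RS] by auto
  have QA: "Q A = Some (lead_coeff p)" unfolding A_def using Q_inf_lead[OF p] .
  have QB: "Q B = Some (lead_coeff q)" unfolding B_def using Q_inf_lead[OF q(1)] .
  have lq: "lead_coeff q \<noteq> 0" "lead_coeff p \<noteq> 0" using q False by auto
  have QiB: "Q (inverse B) = Some (inverse (lead_coeff q))" using place_inv[OF Qp RS AB(2) QB lq(1)] .
  have iBin: "inverse B \<in> ratfun S" using subfieldD(6)[OF RS AB(2)] .
  have QAB: "Q (A * inverse B) = Some (lead_coeff p * inverse (lead_coeff q))"
    using place_mult[OF Qp AB(1) iBin QA QiB] .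
  have ABin: "A * inverse B \<in> ratfun S" using subfieldD(4)[OF RS AB(1) iBin] .
  have Fq0: "Fp q \<noteq> 0" using q Fp_eq0 by simp
  show ?thesis
  proof (cases "degree p \<le> degree q")
    case True
    define k where "k = degree q - degree p"
    have dq: "degree q = degree p + k" using True k_def by simp
    have "Fract p q = A * inverse B * zz ^ k"
      unfolding A_def B_def Fract_Fp dq power_add using zz_nz Fq0 by (simp add: field_simps)
    moreover have "Q (A * inverse B * zz ^ k) = Some (lead_coeff p * inverse (lead_coeff q) * 0 ^ k)"
      by (rule place_mult[OF Qp ABin zzpow_in QAB zzpow])
    ultimately show ?thesis using True k_def by (simp add: divide_inverse)
  next
    case False
    define k where "k = degree p - degree q"
    have dp: "degree p = degree q + k" using False k_def by simp
    have k0: "k > 0" using False k_def by simp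
    have yz: "zz = inverse yvar" by (simp add: zz_def)
    have "Fract p q = yvar ^ k * (A * inverse B)"
      unfolding A_def B_def Fract_Fp dp power_add yz using yvar_nz Fq0
      by (simp add: field_simps power_inverse)
    moreover have "Q (yvar ^ k) = None"
    proof -
      have "Q (zz ^ k) = Some 0" using zzpow k0 by simp
      moreover have "zz ^ k = inverse (yvar ^ k)" by (simp add: yz power_inverse)
      ultimately show ?thesis using place_inv0[OF Qp RS zzpow_in] zz_nz by (metis inverse_inverse_eq power_eq_0_iff)
    qed
    moreover have "Q (yvar ^ k * (A * inverse B)) = None"
      using place_mult_none[OF Qp RS subfield_pow[OF RS yvar_in[OF S]] ABin calculation(2) QAB] lq by simp
    ultimately show ?thesis using False by simp
  qed
qed

end
end

lemma place_inv_det: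
  assumes P1: "place_on K UNIV Q1" and P2: "place_on K UNIV Q2" and K: "is_subfield K"
    and x: "x \<in> K" "x \<noteq> 0" "Q1 x = Q2 x"
  shows "Q1 (inverse x) = Q2 (inverse x)"
proof (cases "Q1 x")
  case None
  then show ?thesis using place_invN[OF P1 x(1) None x(2)] place_invN[OF P2 x(1) _ x(2)] x(3) by simp
next
  case (Some v)
  show ?thesis
  proof (cases "v = 0")
    case True
    then show ?thesis using place_inv0[OF P1 K x(1) _ x(2)] place_inv0[OF P2 K x(1) _ x(2)] Some x(3) by simp
  next
    case False
    then show ?thesis using place_inv[OF P1 K x(1) Some False] place_inv[OF P2 K x(1) _ False] Some x(3) by simp
  qed
qed

lemma Splace_unique:
  assumes Q1: "Splace S Q1" and Q2: "Splace S Q2" and y: "Q1 yvar = Q2 yvar"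
  shows "f \<in> ratfun S \<Longrightarrow> Q1 f = Q2 f"
proof -
  interpret A: Splace S Q1 by (rule Q1)
  interpret B: Splace S Q2 by (rule Q2)
  assume f: "f \<in> ratfun S"
  then obtain p q where pq: "f = Fract p q" "q \<noteq> 0" "Sp S p" "Sp S q" using ratfun_cases[OF A.S] by blast
  show ?thesis
  proof (cases "Q1 yvar")
    case None
    then show ?thesis using A.Q_inf_val[OF None pq(3,4,2)] B.Q_inf_val[OF _ pq(3,4,2)] y pq(1) by simp
  next
    case (Some a)
    have ya: "Q2 yvar = Some a" using Some y by simp
    have "\<forall>p. Sp S p \<longrightarrow> Q1 (Fract p q) = Q2 (Fract p q)" using pq(4,2)
    proof (induction "degree q" arbitrary: q rule: less_induct)
      case less
      show ?case
      proof (intro allI impI)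
        fix p assume p: "Sp S p"
        obtain s r where sr: "Sp S s" "Sp S r" "p = s * q + r" "r = 0 \<or> degree r < degree q"
          using sdiv[OF A.S less.prems p] by blast
        have e: "Fract p q = Fp s + Fract r q" using less.prems(2) sr(3) by (simp add: Fp_def)
        have Qs: "Q1 (Fp s) = Some (poly s a)" "Q2 (Fp s) = Some (poly s a)"
          using A.Q_Fp_fin[OF Some sr(1)] B.Q_Fp_fin[OF ya sr(1)] by auto
        show "Q1 (Fract p q) = Q2 (Fract p q)"
        proof (cases "r = 0")
          case True
          then show ?thesis using e Qs by (simp add: fract_collapse)
        next
          case False
          then have dr: "degree r < degree q" using sr(4) by simp
          have IH: "Q1 (Fract q r) = Q2 (Fract q r)" using less.hyps[OF dr sr(2) False] less.prems(1) by blast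
          have qrin: "Fract q r \<in> ratfun S" using ratfun_Fract[OF A.S less.prems(1) sr(2) False] .
          have qr0: "Fract q r \<noteq> 0" using False less.prems(2) by (simp add: eq_fract Zero_fract_def)
          have rq: "Q1 (Fract r q) = Q2 (Fract r q)"
            using place_inv_det[OF A.Qp B.Qp A.RS qrin qr0 IH] by simp
          have rqin: "Fract r q \<in> ratfun S" using ratfun_Fract[OF A.S sr(2) less.prems(1,2)] .
          have sin: "Fp s \<in> ratfun S" using Fp_in[OF A.S sr(1)] .
          show ?thesis
          proof (cases "Q1 (Fract r q)")
            case None
            then show ?thesis using place_add_none[OF A.Qp A.RS sin rqin Qs(1) None]
              place_add_none[OF B.Qp B.RS sin rqin Qs(2)] rq e by simp
          next
            case (Some u)
            then show ?thesis using place_add[OF A.Qp sin rqin Qs(1) Some]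
              place_add[OF B.Qp sin rqin Qs(2)] rq e by simp
          qed
        qed
      qed
    qed
    then show ?thesis using pq by simp
  qed
qed


lemma poly_lin_pow: "poly ([:- a, 1:] ^ k * p1) t = (t - a) ^ k * poly p1 (t::real)"
proof -
  have "poly [:- a, 1:] t = t - a" by (simp add: algebra_simps)
  then show ?thesis unfolding poly_mult poly_power by simp
qed

lemma dich_id:
  fixes p q :: "real poly"
  assumes p: "p \<noteq> 0" and q: "q \<noteq> 0"
  shows "(\<exists>L. ((\<lambda>t. poly p t / poly q t) \<longlongrightarrow> L) (at a)) \<or>
         filterlim (\<lambda>t. poly p t / poly q t) at_infinity (at a)"
proof -
  obtain p1 where p1: "p = [:- a, 1:] ^ order a p * p1" "\<not> [:- a, 1:] dvd p1" using order_decomp[OF p] by blast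
  obtain q1 where q1: "q = [:- a, 1:] ^ order a q * q1" "\<not> [:- a, 1:] dvd q1" using order_decomp[OF q] by blast
  have p1a: "poly p1 a \<noteq> 0" using p1(2) by (simp add: poly_eq_0_iff_dvd)
  have q1a: "poly q1 a \<noteq> 0" using q1(2) by (simp add: poly_eq_0_iff_dvd)
  define k where "k = order a p"
  define m where "m = order a q"
  have ev: "eventually (\<lambda>t. t \<noteq> a) (at a)" by (simp add: eventually_at_filter)
  have pt: "poly p t = (t - a) ^ k * poly p1 t" for t using p1(1) poly_lin_pow k_def by metis
  have qt: "poly q t = (t - a) ^ m * poly q1 t" for t using q1(1) poly_lin_pow m_def by metis
  show ?thesis
  proof (cases "m \<le> k")
    case True
    define j where "j = k - m"
    have kj: "k = m + j" using True j_def by simp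
    have lim: "((\<lambda>t. (t - a) ^ j * poly p1 t / poly q1 t) \<longlongrightarrow> (a - a) ^ j * poly p1 a / poly q1 a) (at a)"
      using q1a by (intro tendsto_intros isCont_tendsto_compose[OF poly_isCont] tendsto_ident_at) auto
    have "eventually (\<lambda>t. (t - a) ^ j * poly p1 t / poly q1 t = poly p t / poly q t) (at a)"
      using ev by eventually_elim (simp add: pt qt kj power_add)
    then have "((\<lambda>t. poly p t / poly q t) \<longlongrightarrow> (a - a) ^ j * poly p1 a / poly q1 a) (at a)"
      by (rule Lim_transform_eventually[OF lim])
    then show ?thesis by blast
  next
    case False
    define j where "j = m - k"
    have mj: "m = k + j" "j > 0" using False j_def by auto
    have num: "((\<lambda>t. poly p1 t) \<longlongrightarrow> poly p1 a) (at a)"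
      by (intro isCont_tendsto_compose[OF poly_isCont] tendsto_ident_at)
    have den0: "((\<lambda>t. (t - a) ^ j * poly q1 t) \<longlongrightarrow> (a - a) ^ j * poly q1 a) (at a)"
      by (intro tendsto_intros isCont_tendsto_compose[OF poly_isCont] tendsto_ident_at)
    have evq: "eventually (\<lambda>t. poly q1 t \<noteq> 0) (at a)"
      using isCont_tendsto_compose[OF poly_isCont tendsto_ident_at, of q1 a] q1a
      by (metis tendsto_imp_eventually_ne)
    have den: "filterlim (\<lambda>t. (t - a) ^ j * poly q1 t) (at 0) (at a)"
    proof (rule filterlim_atI)
      show "((\<lambda>t. (t - a) ^ j * poly q1 t) \<longlongrightarrow> 0) (at a)" using den0 mj(2) by (simp add: power_0_left)
      show "eventually (\<lambda>t. (t - a) ^ j * poly q1 t \<noteq> 0) (at a)"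
        using ev evq by eventually_elim simp
    qed
    have inf: "filterlim (\<lambda>t. poly p1 t / ((t - a) ^ j * poly q1 t)) at_infinity (at a)"
      by (rule filterlim_divide_at_infinity[OF num den p1a])
    have "eventually (\<lambda>t. poly p1 t / ((t - a) ^ j * poly q1 t) = poly p t / poly q t) (at a)"
      using ev by eventually_elim (simp add: pt qt mj power_add)
    then have "filterlim (\<lambda>t. poly p t / poly q t) at_infinity (at a)"
      by (rule iffD1[OF filterlim_cong[OF refl refl] inf])
    then show ?thesis by blast
  qed
qed

lemma dich_inv:
  fixes p q :: "real poly"
  assumes p: "p \<noteq> 0" and q: "q \<noteq> 0"
  shows "(\<exists>L. ((\<lambda>t. poly p (inverse t) / poly q (inverse t)) \<longlongrightarrow> L) (at 0)) \<or>
         filterlim (\<lambda>t. poly p (inverse t) / poly q (inverse t)) at_infinity (at 0)"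
proof -
  define P' where "P' = reflect_poly p * [:0, 1:] ^ degree q"
  define Q' where "Q' = reflect_poly q * [:0, 1:] ^ degree p"
  have nz: "P' \<noteq> 0" "Q' \<noteq> 0" using p q by (auto simp: P'_def Q'_def)
  have ev: "eventually (\<lambda>t. t \<noteq> 0) (at (0::real))" by (simp add: eventually_at_filter)
  have eq: "eventually (\<lambda>t. poly P' t / poly Q' t = poly p (inverse t) / poly q (inverse t)) (at 0)"
    using ev
  proof eventually_elim
    case (elim t)
    have a: "poly p (inverse t) = poly (reflect_poly p) t / t ^ degree p"
      using poly_reflect_poly_nz[OF elim, of p] elim by (simp add: field_simps)
    have b: "poly q (inverse t) = poly (reflect_poly q) t / t ^ degree q"
      using poly_reflect_poly_nz[OF elim, of q] elim by (simp add: field_simps)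
    have aux: "x * v / (y * u) = (x / u) / (y / v)" if "u \<noteq> 0" "v \<noteq> 0" for x y u v :: real
      using that by (cases "y = 0") (simp_all add: field_simps)
    have "t ^ degree p \<noteq> 0" "t ^ degree q \<noteq> 0" using elim by auto
    then show ?case unfolding a b P'_def Q'_def poly_mult poly_power using aux by simp
  qed
  from dich_id[OF nz, of 0] show ?thesis
  proof
    assume "\<exists>L. ((\<lambda>t. poly P' t / poly Q' t) \<longlongrightarrow> L) (at 0)"
    then obtain L where "((\<lambda>t. poly P' t / poly Q' t) \<longlongrightarrow> L) (at 0)" by blast
    then have "((\<lambda>t. poly p (inverse t) / poly q (inverse t)) \<longlongrightarrow> L) (at 0)"
      by (rule Lim_transform_eventually[OF _ eq])
    then show ?thesis by blast
  next
    assume "filterlim (\<lambda>t. poly P' t / poly Q' t) at_infinity (at 0)"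
    then have "filterlim (\<lambda>t. poly p (inverse t) / poly q (inverse t)) at_infinity (at 0)"
      by (rule iffD1[OF filterlim_cong[OF refl refl eq]])
    then show ?thesis by blast
  qed
qed


definition evalf :: "real poly fract \<Rightarrow> real \<Rightarrow> real" where
  "evalf f t = (let pq = (SOME pq. f = Fract (fst pq) (snd pq) \<and> snd pq \<noteq> 0) in poly (fst pq) t / poly (snd pq) t)"

locale limsc =
  fixes h :: "real \<Rightarrow> real" and a :: real
  assumes inj: "inj h"
  and dich: "\<And>p q. p \<noteq> 0 \<Longrightarrow> q \<noteq> 0 \<Longrightarrow> (\<exists>L. ((\<lambda>t. poly p (h t) / poly q (h t)) \<longlongrightarrow> L) (at a)) \<or>
      filterlim (\<lambda>t. poly p (h t) / poly q (h t)) at_infinity (at a)"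
begin

lemma ev_nz: assumes "r \<noteq> 0" shows "eventually (\<lambda>t. poly r (h t) \<noteq> 0) (at a)"
proof -
  have "finite (h -` {x. poly r x = 0})" using finite_vimageI[OF poly_roots_finite[OF assms] inj] .
  then have "\<not> a islimpt (h -` {x. poly r x = 0})" by (rule islimpt_finite)
  then have "eventually (\<lambda>t. t \<notin> h -` {x. poly r x = 0}) (at a)" by (simp add: islimpt_iff_eventually)
  then show ?thesis by simp
qed

lemma evalf_ev:
  assumes q: "q \<noteq> 0"
  shows "eventually (\<lambda>t. evalf (Fract p q) (h t) = poly p (h t) / poly q (h t)) (at a)"
proof -
  define pq where "pq = (SOME pq. Fract p q = Fract (fst pq) (snd pq) \<and> snd pq \<noteq> 0)"
  have ex: "\<exists>pq. Fract p q = Fract (fst pq) (snd pq) \<and> snd pq \<noteq> 0" using q by (intro exI[of _ "(p, q)"]) simp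
  have h1: "Fract p q = Fract (fst pq) (snd pq)" "snd pq \<noteq> 0" using someI_ex[OF ex] unfolding pq_def by blast+
  have cr: "p * snd pq = fst pq * q" using h1 q by (simp add: eq_fract)
  have e: "evalf (Fract p q) t = poly (fst pq) t / poly (snd pq) t" for t
    unfolding evalf_def pq_def Let_def by simp
  show ?thesis using ev_nz[OF q] ev_nz[OF h1(2)]
  proof eventually_elim
    case (elim t)
    have "poly p (h t) * poly (snd pq) (h t) = poly (fst pq) (h t) * poly q (h t)"
      using arg_cong[OF cr, of "\<lambda>r. poly r (h t)"] by simp
    then show ?case unfolding e using elim by (simp add: field_simps)
  qed
qed

definition V :: "real poly fract \<Rightarrow> real option" where
  "V f = (if \<exists>L. ((\<lambda>t. evalf f (h t)) \<longlongrightarrow> L) (at a) then Some (Lim (at a) (\<lambda>t. evalf f (h t))) else None)"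

lemma V_Some: assumes L: "((\<lambda>t. evalf f (h t)) \<longlongrightarrow> L) (at a)" shows "V f = Some L"
proof -
  have ex: "\<exists>L. ((\<lambda>t. evalf f (h t)) \<longlongrightarrow> L) (at a)" using L by blast
  have "Lim (at a) (\<lambda>t. evalf f (h t)) = L" by (rule tendsto_Lim[OF trivial_limit_at L])
  then show ?thesis unfolding V_def using ex by simp
qed

lemma V_SomeD: assumes H: "V f = Some L" shows "((\<lambda>t. evalf f (h t)) \<longlongrightarrow> L) (at a)"
proof -
  have ex: "\<exists>L. ((\<lambda>t. evalf f (h t)) \<longlongrightarrow> L) (at a)"
  proof (rule ccontr)
    assume "\<not> ?thesis" then have "V f = None" unfolding V_def by simp
    then show False using H by simp
  qed
  then obtain L' where L': "((\<lambda>t. evalf f (h t)) \<longlongrightarrow> L') (at a)" by blast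
  have "V f = Some L'" by (rule V_Some[OF L'])
  then show ?thesis using H L' by simp
qed

lemma V_NoneD: assumes H: "V f = None" shows "\<not> ((\<lambda>t. evalf f (h t)) \<longlongrightarrow> L) (at a)"
proof
  assume "((\<lambda>t. evalf f (h t)) \<longlongrightarrow> L) (at a)"
  then have "V f = Some L" by (rule V_Some)
  then show False using H by simp
qed

lemma V_const:
  assumes "q \<noteq> 0" "eventually (\<lambda>t. poly p (h t) / poly q (h t) = c) (at a)"
  shows "V (Fract p q) = Some c"
proof -
  have "eventually (\<lambda>t. c = evalf (Fract p q) (h t)) (at a)"
    using evalf_ev[OF assms(1), of p] assms(2) by eventually_elim simp
  then show ?thesis by (rule V_Some[OF Lim_transform_eventually[OF tendsto_const]])
qed

lemma V_one: "V 1 = Some 1"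
    using V_const[of 1 1 1] by (simp add: fract_collapse)

lemma V_addmult:
  fixes f g :: "real poly fract"
  assumes H: "V f = Some x" "V g = Some y"
  shows "V (f + g) = Some (x + y) \<and> V (f * g) = Some (x * y)"
proof -
  obtain p q where f: "f = Fract p q" "q \<noteq> 0" by (cases f)
  obtain r s where g: "g = Fract r s" "s \<noteq> 0" by (cases g)
  have lf: "((\<lambda>t. evalf f (h t)) \<longlongrightarrow> x) (at a)" using H(1) by (rule V_SomeD)
  have lg: "((\<lambda>t. evalf g (h t)) \<longlongrightarrow> y) (at a)" using H(2) by (rule V_SomeD)
  have qs: "q * s \<noteq> 0" using f g by simp
  have evs: "eventually (\<lambda>t. (evalf f (h t) = poly p (h t) / poly q (h t) \<and> evalf g (h t) = poly r (h t) / poly s (h t)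
     \<and> evalf (f + g) (h t) = poly (p * s + r * q) (h t) / poly (q * s) (h t)
     \<and> evalf (f * g) (h t) = poly (p * r) (h t) / poly (q * s) (h t)
     \<and> poly q (h t) \<noteq> 0 \<and> poly s (h t) \<noteq> 0)) (at a)"
    using evalf_ev[OF f(2), of p] evalf_ev[OF g(2), of r] evalf_ev[OF qs, of "p * s + r * q"]
      evalf_ev[OF qs, of "p * r"] ev_nz[OF f(2)] ev_nz[OF g(2)]
    by eventually_elim (simp only: f(1) g(1) add_fract[OF f(2) g(2)] mult_fract, simp)
  have "eventually (\<lambda>t. evalf f (h t) + evalf g (h t) = evalf (f + g) (h t)) (at a)"
    using evs
  proof eventually_elim
    case (elim t)
    then have e: "evalf f (h t) = poly p (h t) / poly q (h t)" "evalf g (h t) = poly r (h t) / poly s (h t)"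
      "evalf (f + g) (h t) = poly (p * s + r * q) (h t) / poly (q * s) (h t)"
      "poly q (h t) \<noteq> 0" "poly s (h t) \<noteq> 0" by blast+
    have aux: "b \<noteq> 0 \<Longrightarrow> d \<noteq> 0 \<Longrightarrow> a / b + c / d = (a * d + c * b) / (b * d)" for a b c d :: real
      by (simp add: field_simps)
    show ?case unfolding e(1,2,3) poly_add poly_mult using aux[OF e(4,5)] .
  qed
  then have 1: "V (f + g) = Some (x + y)"
    by (rule V_Some[OF Lim_transform_eventually[OF tendsto_add[OF lf lg]]])
  have "eventually (\<lambda>t. evalf f (h t) * evalf g (h t) = evalf (f * g) (h t)) (at a)"
    using evs
  proof eventually_elim
    case (elim t)
    then have e: "evalf f (h t) = poly p (h t) / poly q (h t)" "evalf g (h t) = poly r (h t) / poly s (h t)"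
      "evalf (f * g) (h t) = poly (p * r) (h t) / poly (q * s) (h t)" by blast+
    show ?case unfolding e(1,2,3) poly_mult by simp
  qed
  then have 2: "V (f * g) = Some (x * y)"
    by (rule V_Some[OF Lim_transform_eventually[OF tendsto_mult[OF lf lg]]])
  show ?thesis using 1 2 by simp
qed

lemma V_inv:
  fixes f :: "real poly fract" assumes f0: "f \<noteq> 0"
  shows "V f = None \<longleftrightarrow> V (inverse f) = Some 0"
proof -
  obtain p q where f: "f = Fract p q" "q \<noteq> 0" by (cases f)
  have p0: "p \<noteq> 0" using f f0 by (auto simp: fract_collapse)
  have fi: "inverse f = Fract q p" using f(1) by simp
  have evs: "eventually (\<lambda>t. (evalf f (h t) = poly p (h t) / poly q (h t)
     \<and> evalf (inverse f) (h t) = poly q (h t) / poly p (h t)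
     \<and> poly q (h t) \<noteq> 0 \<and> poly p (h t) \<noteq> 0)) (at a)"
    using evalf_ev[OF f(2), of p] evalf_ev[OF p0, of q] ev_nz[OF f(2)] ev_nz[OF p0]
    by eventually_elim (simp only: f(1) fi, simp)
  show ?thesis
  proof
    assume N: "V f = None"
    have "\<not> (\<exists>L. ((\<lambda>t. poly p (h t) / poly q (h t)) \<longlongrightarrow> L) (at a))"
    proof
      assume "\<exists>L. ((\<lambda>t. poly p (h t) / poly q (h t)) \<longlongrightarrow> L) (at a)"
      then obtain L where L: "((\<lambda>t. poly p (h t) / poly q (h t)) \<longlongrightarrow> L) (at a)" by blast
      have "eventually (\<lambda>t. poly p (h t) / poly q (h t) = evalf f (h t)) (at a)"
        using evs by eventually_elim (elim conjE, rule sym)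
      then have "((\<lambda>t. evalf f (h t)) \<longlongrightarrow> L) (at a)" by (rule Lim_transform_eventually[OF L])
      then show False by (rule notE[OF V_NoneD[OF N]])
    qed
    then have inf: "filterlim (\<lambda>t. poly p (h t) / poly q (h t)) at_infinity (at a)" using dich[OF p0 f(2)] by (elim disjE) auto
    have "((\<lambda>t. inverse (poly p (h t) / poly q (h t))) \<longlongrightarrow> 0) (at a)"
      by (rule filterlim_compose[OF tendsto_inverse_0 inf])
    moreover have "eventually (\<lambda>t. inverse (poly p (h t) / poly q (h t)) = evalf (inverse f) (h t)) (at a)"
      using evs
    proof eventually_elim
      case (elim t)
      then have e: "evalf (inverse f) (h t) = poly q (h t) / poly p (h t)" by blast
      show ?case unfolding e by simp
    qed
    ultimately show "V (inverse f) = Some 0" by (rule V_Some[OF Lim_transform_eventually])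
  next
    assume S0: "V (inverse f) = Some 0"
    show "V f = None"
    proof (rule ccontr)
      assume "V f \<noteq> None"
      then obtain L where "V f = Some L" by auto
      then have l1: "((\<lambda>t. evalf f (h t)) \<longlongrightarrow> L) (at a)" by (rule V_SomeD)
      have l2: "((\<lambda>t. evalf (inverse f) (h t)) \<longlongrightarrow> 0) (at a)" using V_SomeD[OF S0] .
      have "eventually (\<lambda>t. evalf f (h t) * evalf (inverse f) (h t) = 1) (at a)"
        using evs
      proof eventually_elim
        case (elim t)
        then have e: "evalf f (h t) = poly p (h t) / poly q (h t)" "evalf (inverse f) (h t) = poly q (h t) / poly p (h t)"
          "poly q (h t) \<noteq> 0" "poly p (h t) \<noteq> 0" by blast+
        show ?case unfolding e(1,2) using e(3,4) by simp
      qed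
      then have "((\<lambda>t. 1::real) \<longlongrightarrow> L * 0) (at a)"
        by (rule Lim_transform_eventually[OF tendsto_mult[OF l1 l2]])
      then have "(1::real) = L * 0" by (rule tendsto_unique[OF trivial_limit_at tendsto_const])
      then show False by simp
    qed
  qed
qed

lemma ev_inv:
  fixes f :: "real poly fract" assumes f0: "f \<noteq> 0"
  shows "eventually (\<lambda>t. evalf f (h t) * evalf (inverse f) (h t) = 1) (at a)"
proof -
  obtain p q where f: "f = Fract p q" "q \<noteq> 0" by (cases f)
  have p0: "p \<noteq> 0" using f f0 by (auto simp: fract_collapse)
  have fi: "inverse f = Fract q p" using f(1) by simp
  have evs: "eventually (\<lambda>t. (evalf f (h t) = poly p (h t) / poly q (h t)
     \<and> evalf (inverse f) (h t) = poly q (h t) / poly p (h t)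
     \<and> poly q (h t) \<noteq> 0 \<and> poly p (h t) \<noteq> 0)) (at a)"
    using evalf_ev[OF f(2), of p] evalf_ev[OF p0, of q] ev_nz[OF f(2)] ev_nz[OF p0]
    by eventually_elim (simp only: f(1) fi, simp)
  then show ?thesis
  proof eventually_elim
    case (elim t)
    then have e: "evalf f (h t) = poly p (h t) / poly q (h t)" "evalf (inverse f) (h t) = poly q (h t) / poly p (h t)"
      "poly q (h t) \<noteq> 0" "poly p (h t) \<noteq> 0" by blast+
    show ?case unfolding e(1,2) using e(3,4) by simp
  qed
qed

lemma V_pos:
  assumes ev: "eventually (\<lambda>s. c \<le> evalf g (h s) \<and> evalf g (h s) \<le> C) (at a)" and c: "0 < c"
  shows "\<exists>r>0. V g = Some r"
proof (cases "V g")
  case (Some r)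
  have "((\<lambda>s. evalf g (h s)) \<longlongrightarrow> r) (at a)" by (rule V_SomeD[OF Some])
  moreover have "eventually (\<lambda>s. c \<le> evalf g (h s)) (at a)" using ev by eventually_elim simp
  ultimately have "c \<le> r" using tendsto_lowerbound trivial_limit_at by blast
  then show ?thesis using Some c by auto
next
  case None
  have g0: "g \<noteq> 0"
  proof
    assume g: "g = 0"
    have "eventually (\<lambda>s. evalf (Fract 0 1) (h s) = poly 0 (h s) / poly 1 (h s)) (at a)"
      by (rule evalf_ev) simp
    then have "eventually (\<lambda>s. False) (at a)" using ev unfolding g fract_collapse(1)[of 1, symmetric]
      by eventually_elim (use c in simp)
    then show False using trivial_limit_at[of a] by (simp add: trivial_limit_def)
  qed
  have l: "((\<lambda>s. evalf (inverse g) (h s)) \<longlongrightarrow> 0) (at a)" using V_SomeD V_inv[OF g0] None by blast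
  have "eventually (\<lambda>s. inverse C \<le> evalf (inverse g) (h s)) (at a)"
    using ev ev_inv[OF g0]
  proof eventually_elim
    case (elim s)
    then have "evalf g (h s) * evalf (inverse g) (h s) = 1" by blast
    then have "inverse (evalf g (h s)) = evalf (inverse g) (h s)" by (rule inverse_unique)
    then have "evalf (inverse g) (h s) = inverse (evalf g (h s))" by (rule sym)
    moreover have "0 < evalf g (h s)" using elim c by linarith
    ultimately show ?case using elim by (simp add: le_imp_inverse_le)
  qed
  then have "inverse C \<le> 0" using tendsto_lowerbound[OF l] trivial_limit_at by blast
  moreover have "0 < C"
  proof -
    have "eventually (\<lambda>s. c \<le> C) (at a)" using ev by eventually_elim simp
    then have "c \<le> C" using trivial_limit_at[of a] by (simp add: eventually_const_iff)
    then show ?thesis using c by simp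
  qed
  ultimately show ?thesis by simp
qed

lemma V_place: "place_on UNIV UNIV V"
  unfolding place_on_def
proof (intro conjI ballI allI impI)
  fix f g :: "real poly fract" and x y assume "V f = Some x \<and> V g = Some y"
  then have H: "V f = Some x" "V g = Some y" by auto
  show "V (f + g) = Some (x + y)" using V_addmult[OF H] by (rule conjunct1)
  show "V (f * g) = Some (x * y)" using V_addmult[OF H] by (rule conjunct2)
qed (use V_one V_inv in auto)

end

lemma inj_inverse_real: "inj (inverse :: real \<Rightarrow> real)"
  by (rule injI) simp

interpretation LF: limsc "\<lambda>t. t" x for x
proof
  show "inj (\<lambda>t::real. t)" by (simp add: inj_on_def)
  fix p q :: "real poly" assume "p \<noteq> 0" "q \<noteq> 0"
  from dich_id[OF this, of x] show "(\<exists>L. ((\<lambda>t. poly p t / poly q t) \<longlongrightarrow> L) (at x)) \<or>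
      filterlim (\<lambda>t. poly p t / poly q t) at_infinity (at x)" .
qed

interpretation LI: limsc inverse 0
proof
  show "inj (inverse :: real \<Rightarrow> real)" by (rule inj_inverse_real)
  fix p q :: "real poly" assume "p \<noteq> 0" "q \<noteq> 0"
  from dich_inv[OF this] show "(\<exists>L. ((\<lambda>t. poly p (inverse t) / poly q (inverse t)) \<longlongrightarrow> L) (at 0)) \<or>
      filterlim (\<lambda>t. poly p (inverse t) / poly q (inverse t)) at_infinity (at 0)" .
qed


definition Vof :: "real option \<Rightarrow> real poly fract \<Rightarrow> real option" where
  "Vof v = (case v of Some a \<Rightarrow> LF.V a | None \<Rightarrow> LI.V)"

definition Qplace :: "real set \<Rightarrow> real option \<Rightarrow> real poly fract \<Rightarrow> real option" where
  "Qplace S v f = (if f \<in> ratfun S then Vof v f else None)"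

lemma Vof_place: "place_on UNIV UNIV (Vof v)"
  by (cases v) (simp_all add: Vof_def LF.V_place LI.V_place)

lemma restrict_place:
  assumes P: "place_on UNIV UNIV P" and K: "is_subfield K"
  shows "place_on K UNIV (\<lambda>x. if x \<in> K then P x else None)"
  unfolding place_on_def
proof (intro conjI ballI allI impI)
  show "(if 1 \<in> K then P 1 else None) = Some 1" using place_one[OF P] subfieldD(2)[OF K] by simp
next
  fix a b x y assume ab: "a \<in> K" "b \<in> K" and H: "(if a \<in> K then P a else None) = Some x \<and> (if b \<in> K then P b else None) = Some y"
  then have H': "P a = Some x" "P b = Some y" by auto
  show "(if a + b \<in> K then P (a + b) else None) = Some (x + y)"
    using place_add[OF P _ _ H'] subfieldD(3)[OF K ab] by simp
  show "(if a * b \<in> K then P (a * b) else None) = Some (x * y)"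
    using place_mult[OF P _ _ H'] subfieldD(4)[OF K ab] by simp
next
  fix a assume a: "a \<in> K" "a \<noteq> 0"
  show "((if a \<in> K then P a else None) = None) = ((if inverse a \<in> K then P (inverse a) else None) = Some 0)"
    using place_invax[OF P _ a(2)] a subfieldD(6)[OF K a(1)] by simp
qed auto

lemma LF_cst: "LF.V x (cst c) = Some c"
  unfolding cst_def by (rule LF.V_const) simp_all
lemma LI_cst: "LI.V (cst c) = Some c"
  unfolding cst_def by (rule LI.V_const) simp_all

lemma LF_y: "LF.V x yvar = Some x"
proof -
  have "eventually (\<lambda>t. evalf (Fract [:0, 1:] 1) t = poly [:0, 1:] t / poly 1 t) (at x)"
    by (rule LF.evalf_ev) simp
  then have "eventually (\<lambda>t. t = evalf yvar t) (at x)"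
    unfolding yvar_def by eventually_elim simp
  then show ?thesis by (rule LF.V_Some[OF Lim_transform_eventually[OF tendsto_ident_at]])
qed

lemma LI_y: "LI.V yvar = None"
proof -
  have "eventually (\<lambda>t. evalf (Fract 1 [:0, 1:]) (inverse t) = poly 1 (inverse t) / poly [:0, 1:] (inverse t)) (at (0::real))"
    by (rule LI.evalf_ev) simp
  then have "eventually (\<lambda>t. t = evalf (inverse yvar) (inverse t)) (at (0::real))"
    unfolding yvar_def by eventually_elim (simp add: divide_inverse)
  then have "LI.V (inverse yvar) = Some 0"
    by (rule LI.V_Some[OF Lim_transform_eventually[OF tendsto_ident_at]])
  then show ?thesis using place_invax[OF LI.V_place _ yvar_nz] by simp
qed

context fixes S :: "real set" assumes S: "is_subfield S"
begin

lemma Qplace_place: "place_on (ratfun S) UNIV (Qplace S v)"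
  unfolding Qplace_def[abs_def] using restrict_place[OF Vof_place ratfun_subfield[OF S]] .

lemma Qplace_M: "Qplace S v \<in> M (ratfun S)"
  unfolding M_def using Qplace_place by (simp add: Qplace_def)

lemma Qplace_cst: "c \<in> S \<Longrightarrow> Qplace S v (cst c) = Some c"
  using cst_in[OF S] by (cases v) (simp_all add: Qplace_def Vof_def LF_cst LI_cst)

lemma Qplace_y: "Qplace S v yvar = v"
  using yvar_in[OF S] by (cases v) (simp_all add: Qplace_def Vof_def LF_y LI_y)

lemma Qplace_Splace: "Splace S (Qplace S v)"
  using S Qplace_place Qplace_cst by (unfold_locales) auto

lemma M_Splace_eq:
  assumes Q: "Q \<in> M (ratfun S)" "\<forall>c\<in>S. Q (cst c) = Some c"
  shows "Q = Qplace S (Q yvar)"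
proof
  fix f
  have SQ: "Splace S Q" using S Q unfolding M_def by unfold_locales auto
  show "Q f = Qplace S (Q yvar) f"
  proof (cases "f \<in> ratfun S")
    case True
    then show ?thesis using Splace_unique[OF SQ Qplace_Splace] Qplace_y by simp
  next
    case False
    then show ?thesis using Q(1) unfolding M_def by (simp add: Qplace_def)
  qed
qed

lemma const_ext_eq: "const_ext S \<zeta> = Qplace S (\<zeta> yvar)"
  unfolding const_ext_def
proof (rule the_equality)
  show "Qplace S (\<zeta> yvar) \<in> M (ratfun S) \<and> (\<forall>c\<in>S. Qplace S (\<zeta> yvar) (cst c) = Some c) \<and> Qplace S (\<zeta> yvar) yvar = \<zeta> yvar"
    using Qplace_M Qplace_cst Qplace_y by simp
next
  fix Q assume "Q \<in> M (ratfun S) \<and> (\<forall>c\<in>S. Q (cst c) = Some c) \<and> Q yvar = \<zeta> yvar"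
  then show "Q = Qplace S (\<zeta> yvar)" using M_Splace_eq by metis
qed

end


lemma cst_add: "cst (a + b) = cst a + cst b" by (simp add: cst_def)
lemma cst_mult: "cst (a * b) = cst a * cst b" by (simp add: cst_def mult.commute)
lemma cst_diff: "cst (a - b) = cst a - cst b" by (simp add: cst_def)
lemma cst_0: "cst 0 = 0" by (simp add: cst_def fract_collapse)
lemma cst_1: "cst 1 = 1" by (simp add: cst_def fract_collapse pCons_one)
lemma cst_inverse: "cst (inverse a) = inverse (cst (a::real))"
  by (cases "a = 0") (simp_all add: cst_def eq_fract fract_collapse)
lemma cst_eq0: "cst a = 0 \<longleftrightarrow> (a::real) = 0"
  by (simp add: cst_def eq_fract Zero_fract_def)

lemma subfield_of_nat: "is_subfield R \<Longrightarrow> of_nat n \<in> R"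
  by (induction n) (auto intro: subfieldD)
lemma subfield_of_int: "is_subfield R \<Longrightarrow> of_int k \<in> R"
  by (cases k rule: int_cases) (auto intro: subfieldD subfield_of_nat simp del: of_nat_Suc)

locale arch =
  fixes R :: "real set" and \<zeta> :: "real poly fract \<Rightarrow> real option"
  assumes R: "is_subfield R" and sq: "\<forall>a\<in>R. a \<ge> 0 \<longrightarrow> (\<exists>b\<in>R. b * b = a)"
    and Zp: "place_on (ratfun R) UNIV \<zeta>"
begin

abbreviation Z where "Z c \<equiv> \<zeta> (cst c)"

lemma RS: "is_subfield (ratfun R)" using ratfun_subfield[OF R] .
lemma ci: "c \<in> R \<Longrightarrow> cst c \<in> ratfun R" using cst_in[OF R] .

lemma Z_add: "c \<in> R \<Longrightarrow> d \<in> R \<Longrightarrow> Z c = Some x \<Longrightarrow> Z d = Some y \<Longrightarrow> Z (c + d) = Some (x + y)"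
  unfolding cst_add by (rule place_add[OF Zp ci ci])
lemma Z_mult: "c \<in> R \<Longrightarrow> d \<in> R \<Longrightarrow> Z c = Some x \<Longrightarrow> Z d = Some y \<Longrightarrow> Z (c * d) = Some (x * y)"
  unfolding cst_mult by (rule place_mult[OF Zp ci ci])
lemma Z_diff: "c \<in> R \<Longrightarrow> d \<in> R \<Longrightarrow> Z c = Some x \<Longrightarrow> Z d = Some y \<Longrightarrow> Z (c - d) = Some (x - y)"
  unfolding cst_diff by (rule place_diff[OF Zp RS ci ci])
lemma Z0: "Z 0 = Some 0" unfolding cst_0 using place_zero[OF Zp RS] .
lemma Z1: "Z 1 = Some 1" unfolding cst_1 using place_one[OF Zp] .

lemma Z_nat: "Z (of_nat n) = Some (of_nat n)"
proof (induction n)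
  case 0 then show ?case using Z0 by simp
next
  case (Suc n)
  have "Z (1 + of_nat n) = Some (1 + of_nat n)"
    by (rule Z_add[OF subfieldD(2)[OF R] subfield_of_nat[OF R] Z1 Suc])
  then show ?case by (simp add: add.commute)
qed

lemma Z_int: "Z (of_int k) = Some (of_int k)"
proof (cases k rule: int_cases)
  case (nonneg n) then show ?thesis using Z_nat by simp
next
  case (neg n)
  have "Z (0 - of_nat (Suc n)) = Some (0 - of_nat (Suc n))"
    by (rule Z_diff[OF subfieldD(1)[OF R] subfield_of_nat[OF R] Z0 Z_nat])
  then show ?thesis using neg by simp
qed

lemma Z_sqNone:
  assumes b: "b \<in> R" "Z b = None" shows "Z (b * b) = None"
proof -
  have b0: "b \<noteq> 0" using b Z0 by auto
  have "\<zeta> (inverse (cst b)) = Some 0" using place_invN[OF Zp ci[OF b(1)] b(2)] b0 cst_eq0 by simp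
  then have "Z (inverse b) = Some 0" by (simp add: cst_inverse)
  then have "Z (inverse b * inverse b) = Some (0 * 0)"
    using Z_mult subfieldD(6)[OF R b(1)] by blast
  then have "\<zeta> (inverse (cst (b * b))) = Some 0" by (simp add: cst_inverse[symmetric])
  moreover have "cst (b * b) \<noteq> 0" using b0 cst_eq0 by simp
  ultimately have "\<zeta> (inverse (inverse (cst (b * b)))) = None"
    using place_inv0[OF Zp RS subfieldD(6)[OF RS ci[OF subfieldD(4)[OF R b(1) b(1)]]]] by simp
  then show ?thesis by simp
qed

lemma Z_nonneg:
  assumes c: "c \<in> R" "0 \<le> c" "Z c = Some v" shows "0 \<le> v"
proof -
  obtain b where b: "b \<in> R" "b * b = c" using sq c by blast
  show ?thesis
  proof (cases "Z b")
    case None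
    then show ?thesis using Z_sqNone[OF b(1) None] b c by simp
  next
    case (Some w)
    then have "Z (b * b) = Some (w * w)" using Z_mult[OF b(1) b(1)] by blast
    then show ?thesis using b c by simp
  qed
qed

lemma Z_bound:
  assumes ab: "a \<in> R" "b \<in> R" "0 \<le> a" "a \<le> b" and Zb: "Z b \<noteq> None"
  shows "Z a \<noteq> None"
proof (cases "a = 0")
  case True then show ?thesis using Z0 by simp
next
  case False
  then have a0: "0 < a" using ab by simp
  obtain e where e: "e \<in> R" "e * e = a" using sq ab by blast
  obtain d where d: "d \<in> R" "d * d = b - a" using sq ab subfield_diff[OF R] by (metis diff_ge_0_iff_ge)
  have e0: "e \<noteq> 0" using e a0 by auto
  show ?thesis
  proof
    assume N: "Z a = None"
    obtain y where y: "Z b = Some y" using Zb by auto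
    have "\<zeta> (inverse (cst a)) = Some 0" using place_invN[OF Zp ci[OF ab(1)] N] False cst_eq0 by simp
    then have ia: "Z (inverse a) = Some 0" by (simp add: cst_inverse)
    have iaR: "inverse a \<in> R" using subfieldD(6)[OF R ab(1)] .
    have "Z (b * inverse a) = Some (y * 0)" by (rule Z_mult[OF ab(2) iaR y ia])
    then have "Z (b * inverse a - 1) = Some (y * 0 - 1)"
      using Z_diff[OF subfieldD(4)[OF R ab(2) iaR] subfieldD(2)[OF R] _ Z1] by blast
    moreover have "b * inverse a - 1 = (d / e) * (d / e)"
      using e d e0 a0 by (simp add: field_simps)
    ultimately have Zde: "Z ((d / e) * (d / e)) = Some (-1)" by simp
    have deR: "(d / e) * (d / e) \<in> R" using subfield_divide[OF R d(1) e(1)] subfieldD(4)[OF R] by blast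
    have "0 \<le> (-1::real)" by (rule Z_nonneg[OF deR _ Zde]) simp
    then show False by simp
  qed
qed

lemma Z_fin: assumes c: "c \<in> R" shows "Z c \<noteq> None"
proof -
  obtain n :: nat where n: "\<bar>c\<bar> < of_nat n" using reals_Archimedean2 by blast
  have "c * c \<le> of_nat n * of_nat n"
    using n by (metis abs_ge_zero abs_mult_self_eq abs_real_def less_le mult_mono order.strict_trans1)
  moreover have "Z (of_nat n * of_nat n) \<noteq> None"
    using Z_mult[OF subfield_of_nat[OF R] subfield_of_nat[OF R] Z_nat Z_nat] by simp
  ultimately have zz: "Z (c * c) \<noteq> None"
    using Z_bound[OF subfieldD(4)[OF R c c] subfieldD(4)[OF R subfield_of_nat[OF R] subfield_of_nat[OF R]]] by simp
  show ?thesis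
  proof
    assume N: "Z c = None"
    show False using Z_sqNone[OF c N] zz by simp
  qed
qed

lemma Z_id: assumes c: "c \<in> R" shows "Z c = Some c"
proof -
  obtain v where v: "Z c = Some v" using Z_fin[OF c] by auto
  have "v = c"
  proof (rule ccontr)
    assume vc: "v \<noteq> c"
    then have "0 < \<bar>v - c\<bar>" by simp
    then obtain N :: nat where N: "1 < of_nat N * \<bar>v - c\<bar>" using ex_less_of_nat_mult by blast
    define k where "k = \<lfloor>of_nat N * c\<rfloor>"
    have k1: "of_int k \<le> of_nat N * c" "of_nat N * c < of_int k + 1" unfolding k_def by linarith+
    have NcR: "of_nat N * c \<in> R" using subfieldD(4)[OF R subfield_of_nat[OF R] c] .
    have ZNc: "Z (of_nat N * c) = Some (of_nat N * v)" by (rule Z_mult[OF subfield_of_nat[OF R] c Z_nat v])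
    have z1: "Z (of_nat N * c - of_int k) = Some (of_nat N * v - of_int k)"
      by (rule Z_diff[OF NcR subfield_of_int[OF R] ZNc Z_int])
    have a1: "0 \<le> of_nat N * v - of_int k"
      by (rule Z_nonneg[OF subfield_diff[OF R NcR subfield_of_int[OF R]] _ z1]) (use k1 in simp)
    have kR: "of_int k + 1 \<in> R" using subfieldD(3)[OF R subfield_of_int[OF R] subfieldD(2)[OF R]] .
    have Zk: "Z (of_int k + 1) = Some (of_int k + 1)" using Z_int[of "k + 1"] by simp
    have z2: "Z (of_int k + 1 - of_nat N * c) = Some (of_int k + 1 - of_nat N * v)"
      by (rule Z_diff[OF kR NcR Zk ZNc])
    have a2: "0 \<le> of_int k + 1 - of_nat N * v"
      by (rule Z_nonneg[OF subfield_diff[OF R kR NcR] _ z2]) (use k1 in simp)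
    have "\<bar>of_nat N * v - of_nat N * c\<bar> \<le> 1" using a1 a2 k1 by linarith
    then have "of_nat N * \<bar>v - c\<bar> \<le> 1" by (simp add: abs_mult right_diff_distrib[symmetric])
    then show False using N by simp
  qed
  then show ?thesis using v by simp
qed

end


lemma ball_eventually:
  fixes P :: "real \<Rightarrow> bool"
  assumes "\<forall>s. dist s t < d \<longrightarrow> P s" "d > 0"
  shows "eventually P (at t)"
  unfolding eventually_at using assms by auto

lemma LF_nbhd:
  assumes V: "LF.V a g = Some r" and r: "r > 0"
  shows "\<exists>\<delta>>0. \<forall>t. \<bar>t - a\<bar> < \<delta> \<longrightarrow> (\<exists>r'>0. LF.V t g = Some r')"
proof -
  have l: "((\<lambda>s. evalf g s) \<longlongrightarrow> r) (at a)" using LF.V_SomeD[OF V] .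
  have "eventually (\<lambda>s. dist (evalf g s) r < r / 2) (at a)" using tendstoD[OF l, of "r / 2"] r by simp
  then obtain \<delta> where \<delta>: "\<delta> > 0" "\<forall>s. s \<noteq> a \<and> dist s a < \<delta> \<longrightarrow> dist (evalf g s) r < r / 2"
    unfolding eventually_at by auto
  have "\<forall>t. \<bar>t - a\<bar> < \<delta> \<longrightarrow> (\<exists>r'>0. LF.V t g = Some r')"
  proof (intro allI impI)
    fix t assume t: "\<bar>t - a\<bar> < \<delta>"
    show "\<exists>r'>0. LF.V t g = Some r'"
    proof (cases "t = a")
      case True then show ?thesis using V r by auto
    next
      case False
      define d where "d = min \<bar>t - a\<bar> (\<delta> - \<bar>t - a\<bar>)"
      have d0: "d > 0" using False t by (simp add: d_def)
      have "\<forall>s. dist s t < d \<longrightarrow> (r / 2 \<le> evalf g s \<and> evalf g s \<le> 3 * r / 2)"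
      proof (intro allI impI)
        fix s assume "dist s t < d"
        then have "s \<noteq> a" "dist s a < \<delta>" unfolding d_def dist_real_def by auto
        then have "dist (evalf g s) r < r / 2" using \<delta>(2) by blast
        then show "r / 2 \<le> evalf g s \<and> evalf g s \<le> 3 * r / 2" unfolding dist_real_def by linarith
      qed
      then have "eventually (\<lambda>s. r / 2 \<le> evalf g s \<and> evalf g s \<le> 3 * r / 2) (at t)"
        by (rule ball_eventually[OF _ d0])
      then show ?thesis using LF.V_pos[of "r / 2" g "3 * r / 2" t] r by simp
    qed
  qed
  then show ?thesis using \<delta>(1) by blast
qed

lemma LI_nbhd:
  assumes V: "LI.V g = Some r" and r: "r > 0"
  shows "\<exists>T. \<forall>t. T < \<bar>t\<bar> \<longrightarrow> (\<exists>r'>0. LF.V t g = Some r')"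
proof -
  have l: "((\<lambda>s. evalf g (inverse s)) \<longlongrightarrow> r) (at 0)" using LI.V_SomeD[OF V] .
  have "eventually (\<lambda>s. dist (evalf g (inverse s)) r < r / 2) (at 0)" using tendstoD[OF l, of "r / 2"] r by simp
  then obtain \<delta> where \<delta>: "\<delta> > 0" "\<forall>s. s \<noteq> 0 \<and> dist s 0 < \<delta> \<longrightarrow> dist (evalf g (inverse s)) r < r / 2"
    unfolding eventually_at by auto
  define T where "T = inverse \<delta>"
  have T0: "T > 0" using \<delta>(1) by (simp add: T_def)
  have big: "dist (evalf g u) r < r / 2" if u: "T < \<bar>u\<bar>" for u
  proof -
    have u0: "u \<noteq> 0" using u T0 by auto
    have "\<bar>inverse u\<bar> < \<delta>" using u T0 \<delta>(1) unfolding T_def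
      by (metis abs_inverse inverse_less_imp_less inverse_inverse_eq zero_less_abs_iff u0 inverse_positive_iff_positive)
    then have "inverse u \<noteq> 0 \<and> dist (inverse u) 0 < \<delta>" using u0 by (simp add: dist_real_def)
    then have "dist (evalf g (inverse (inverse u))) r < r / 2" by (rule \<delta>(2)[rule_format])
    then show ?thesis by simp
  qed
  have "\<forall>t. T < \<bar>t\<bar> \<longrightarrow> (\<exists>r'>0. LF.V t g = Some r')"
  proof (intro allI impI)
    fix t assume t: "T < \<bar>t\<bar>"
    define d where "d = \<bar>t\<bar> - T"
    have d0: "d > 0" using t by (simp add: d_def)
    have "\<forall>s. dist s t < d \<longrightarrow> (r / 2 \<le> evalf g s \<and> evalf g s \<le> 3 * r / 2)"
    proof (intro allI impI)
      fix s assume "dist s t < d"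
      then have "T < \<bar>s\<bar>" unfolding d_def dist_real_def by linarith
      then have "dist (evalf g s) r < r / 2" by (rule big)
      then show "r / 2 \<le> evalf g s \<and> evalf g s \<le> 3 * r / 2" unfolding dist_real_def by linarith
    qed
    then have "eventually (\<lambda>s. r / 2 \<le> evalf g s \<and> evalf g s \<le> 3 * r / 2) (at t)"
      by (rule ball_eventually[OF _ d0])
    then show "\<exists>r'>0. LF.V t g = Some r'" using LF.V_pos[of "r / 2" g "3 * r / 2" t] r by simp
  qed
  then show ?thesis by blast
qed

lemma Rats_sub: "is_subfield R \<Longrightarrow> x \<in> \<rat> \<Longrightarrow> x \<in> R"
  by (elim Rats_cases') (auto intro!: subfield_divide subfield_of_int)

lemma Sp_pair: "is_subfield S \<Longrightarrow> x \<in> S \<Longrightarrow> y \<in> S \<Longrightarrow> Sp S [:x, y:]"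
  by (simp add: Sp_def coeff_pCons subfieldD split: nat.split)


lemma M_topspace: assumes K: "is_subfield K" shows "topspace (Mtop K) = M K"
proof -
  have "topspace (Mtop K) = \<Union> {H' K b | b. b \<in> K}" unfolding Mtop_def by simp
  also have "\<dots> = M K"
  proof
    show "\<Union> {H' K b | b. b \<in> K} \<subseteq> M K" unfolding H'_def by auto
    show "M K \<subseteq> \<Union> {H' K b | b. b \<in> K}"
    proof
      fix z assume z: "z \<in> M K"
      then have "z 1 = Some 1" unfolding M_def using place_one by blast
      then have "z \<in> H' K 1" using z unfolding H'_def by auto
      then show "z \<in> \<Union> {H' K b | b. b \<in> K}" using subfieldD(2)[OF K] by blast
    qed
  qed
  finally show ?thesis .
qed

lemma H'_open: "b \<in> K \<Longrightarrow> openin (Mtop K) (H' K b)"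
  unfolding Mtop_def by (rule topology_generated_by_Basis) blast

lemma Vof_y: "is_subfield (S :: real set) \<Longrightarrow> Vof v yvar = v"
  using Qplace_y[of S v] yvar_in[of S] by (simp add: Qplace_def)

theorem theorem6p2:
  fixes R :: "real set" and e :: "real \<Rightarrow> 'f::field" and \<xi> :: "'f \<Rightarrow> real option"
  assumes "real_closed_subfield R" and "archimedean_set R"
    and "formally_real TYPE('f)"
    and "field_embedding_on R e"
    and "place_on (UNIV :: 'f set) UNIV \<xi>"
    and "\<forall>r\<in>R. \<xi> (e r) = Some r"
  shows "continuous_map (Mtop (ratfun R)) (Mtop (UNIV :: 'f poly fract set)) (iota \<xi>)
       \<and> inj_on (iota \<xi>) (M (ratfun R))"
proof -
  interpret gplace \<xi> by unfold_locales (rule assms(5))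
  define Fb where "Fb = residue_field \<xi>"
  have Fb: "is_subfield Fb" using residue_subfield Fb_def by simp
  have RR: "is_subfield R" and sq: "\<forall>a\<in>R. a \<ge> 0 \<longrightarrow> (\<exists>b\<in>R. b * b = a)"
    using assms(1) unfolding real_closed_subfield_def by blast+
  have gp: "place_on UNIV (ratfun Fb) gauss" using gauss_place Fb_def by simp
  have iota_eq: "iota \<xi> z = comp_place (Qplace Fb (z yvar)) gauss" for z
    unfolding iota_def using const_ext_eq[OF Fb] gauss_ext_eq Fb_def by simp
  have iotaM: "iota \<xi> z \<in> M UNIV" for z
    unfolding M_def iota_eq using comp_place_on[OF gp Qplace_place[OF Fb] ratfun_subfield[OF Fb]] by simp
  have zeq: "z = Qplace R (z yvar)" if z: "z \<in> M (ratfun R)" for z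
  proof -
    interpret arch R z using RR sq z unfolding M_def by unfold_locales auto
    show ?thesis using M_Splace_eq[OF RR z] Z_id by blast
  qed
  have zS: "Splace R z" if z: "z \<in> M (ratfun R)" for z
    using Qplace_Splace[OF RR, of "z yvar"] zeq[OF z] by simp
  have iota_val: "iota \<xi> z b = Vof (z yvar) g" if "gauss b = Some g" for z b g
  proof -
    have "g \<in> ratfun Fb" using place_range[OF gp _ that] by simp
    then show ?thesis unfolding iota_eq comp_place_def using that by (simp add: Qplace_def)
  qed
  have iota_None: "iota \<xi> z b = None" if "gauss b = None" for z b
    unfolding iota_eq comp_place_def using that by simp
  have TS: "topspace (Mtop (ratfun R)) = M (ratfun R)" using M_topspace[OF ratfun_subfield[OF RR]] .
  show ?thesis
  proof
    show "continuous_map (Mtop (ratfun R)) (Mtop (UNIV :: 'f poly fract set)) (iota \<xi>)"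
      unfolding Mtop_def[of "UNIV :: 'f poly fract set"]
    proof (rule continuous_on_generated_topo)
      show "iota \<xi> ` topspace (Mtop (ratfun R)) \<subseteq> \<Union> {H' UNIV b |b. b \<in> (UNIV :: 'f poly fract set)}"
      proof
        fix w assume "w \<in> iota \<xi> ` topspace (Mtop (ratfun R))"
        then obtain z where w: "w = iota \<xi> z" by blast
        have "w 1 = Some 1" using iotaM[of z] w unfolding M_def using place_one by blast
        then have "w \<in> H' UNIV 1" using iotaM[of z] w unfolding H'_def by auto
        then show "w \<in> \<Union> {H' UNIV b |b. b \<in> (UNIV :: 'f poly fract set)}" by blast
      qed
    next
      fix U assume "U \<in> {H' UNIV b |b. b \<in> (UNIV :: 'f poly fract set)}"
      then obtain b :: "'f poly fract" where U: "U = H' UNIV b" by blast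
      define Set where "Set = iota \<xi> -` U \<inter> M (ratfun R)"
      have SetI: "z \<in> Set" if "z \<in> M (ratfun R)" "\<exists>r>0. iota \<xi> z b = Some r" for z
        using that iotaM[of z] unfolding Set_def U H'_def by auto
      have SetD: "\<exists>r>0. iota \<xi> z b = Some r" "z \<in> M (ratfun R)" if "z \<in> Set" for z
        using that unfolding Set_def U H'_def by auto
      have "openin (Mtop (ratfun R)) Set"
      proof (subst openin_subopen, intro ballI)
        fix z0 assume z0: "z0 \<in> Set"
        obtain r0 where r0: "r0 > 0" "iota \<xi> z0 b = Some r0" using SetD[OF z0] by blast
        obtain g where g: "gauss b = Some g" using iota_None r0 by (cases "gauss b") auto
        have Vz0: "Vof (z0 yvar) g = Some r0" using iota_val[OF g] r0 by simp
        have z0M: "z0 \<in> M (ratfun R)" using SetD[OF z0] by blast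
        have SetI': "z \<in> Set" if "z \<in> M (ratfun R)" "\<exists>r>0. Vof (z yvar) g = Some r" for z
          using SetI[OF that(1)] that(2) iota_val[OF g] by simp
        show "\<exists>T. openin (Mtop (ratfun R)) T \<and> z0 \<in> T \<and> T \<subseteq> Set"
        proof (cases "z0 yvar")
          case (Some a)
          have "LF.V a g = Some r0" using Vz0 Some by (simp add: Vof_def)
          then obtain \<delta> where \<delta>: "\<delta> > 0" "\<forall>t. \<bar>t - a\<bar> < \<delta> \<longrightarrow> (\<exists>r'>0. LF.V t g = Some r')"
            using LF_nbhd r0(1) by blast
          obtain c where c: "c \<in> \<rat>" "a - \<delta> < c" "c < a" using Rats_dense_in_real[of "a - \<delta>" a] \<delta>(1) by auto
          obtain d where d: "d \<in> \<rat>" "a < d" "d < a + \<delta>" using Rats_dense_in_real[of a "a + \<delta>"] \<delta>(1) by auto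
          have cR: "c \<in> R" "d \<in> R" "-c \<in> R" "-1 \<in> R" "1 \<in> R"
            using Rats_sub[OF RR] c d subfieldD[OF RR] by auto
          define p where "p = [:-c, 1:] * [:d, -1:]"
          have pS: "Sp R p" unfolding p_def using Sp_mult[OF RR Sp_pair[OF RR cR(3) cR(5)] Sp_pair[OF RR cR(2) cR(4)]] .
          have pt: "poly p t = (t - c) * (d - t)" for t by (simp add: p_def algebra_simps)
          have dp: "degree p = 2" unfolding p_def by (subst degree_mult_eq) auto
          define b' where "b' = Fract p 1"
          have b'R: "b' \<in> ratfun R" unfolding b'_def using ratfun_Fract[OF RR pS Sp_1[OF RR]] by simp
          have val: "z b' = Some ((t - c) * (d - t))" if "z \<in> M (ratfun R)" "z yvar = Some t" for z t
          proof -
            interpret Splace R z using zS[OF that(1)] .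
            show ?thesis using Q_Fp_fin[OF that(2) pS] pt unfolding b'_def Fp_def by simp
          qed
          have valN: "z b' = None" if "z \<in> M (ratfun R)" "z yvar = None" for z
          proof -
            interpret Splace R z using zS[OF that(1)] .
            show ?thesis using Q_inf_val[OF that(2) pS Sp_1[OF RR]] dp unfolding b'_def by simp
          qed
          show ?thesis
          proof (intro exI conjI)
            show "openin (Mtop (ratfun R)) (H' (ratfun R) b')" using H'_open[OF b'R] .
            show "z0 \<in> H' (ratfun R) b'" unfolding H'_def using z0M val[OF z0M Some] c d by auto
            show "H' (ratfun R) b' \<subseteq> Set"
            proof
              fix z assume z: "z \<in> H' (ratfun R) b'"
              then obtain s where zM: "z \<in> M (ratfun R)" and s: "z b' = Some s" "s > 0" unfolding H'_def by auto
              obtain t where t: "z yvar = Some t" using valN[OF zM] s by (cases "z yvar") auto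
              have "(t - c) * (d - t) > 0" using val[OF zM t] s by simp
              then have "c < t" "t < d" using c d by (auto simp: zero_less_mult_iff)
              then have "\<bar>t - a\<bar> < \<delta>" using c d by auto
              then obtain r' where "r' > 0" "LF.V t g = Some r'" using \<delta>(2) by blast
              then show "z \<in> Set" using SetI'[OF zM] t by (auto simp: Vof_def)
            qed
          qed
        next
          case None
          have "LI.V g = Some r0" using Vz0 None by (simp add: Vof_def)
          then obtain T0 where T0: "\<forall>t. T0 < \<bar>t\<bar> \<longrightarrow> (\<exists>r'>0. LF.V t g = Some r')"
            using LI_nbhd r0(1) by blast
          obtain n :: nat where n: "max T0 1 < of_nat n" using reals_Archimedean2 by blast
          define c :: real where "c = of_nat n"
          have c1: "1 < c" "T0 < c" using n c_def by auto
          have cR: "c \<in> R" "-c \<in> R" "0 \<in> R" "1 \<in> R"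
            using subfield_of_nat[OF RR] subfieldD[OF RR] c_def by auto
          define p :: "real poly" where "p = [:0, 1:] * [:0, 1:]"
          define q where "q = [:-c, 1:] * [:c, 1:]"
          have pS: "Sp R p" unfolding p_def using Sp_mult[OF RR Sp_pair[OF RR cR(3) cR(4)] Sp_pair[OF RR cR(3) cR(4)]] .
          have qS: "Sp R q" unfolding q_def using Sp_mult[OF RR Sp_pair[OF RR cR(2) cR(4)] Sp_pair[OF RR cR(1) cR(4)]] .
          have q0: "q \<noteq> 0" unfolding q_def by simp
          have dp: "degree p = 2" "lead_coeff p = 1" unfolding p_def by simp_all
          have dq: "degree q = 2" "lead_coeff q = 1" unfolding q_def by simp_all
          have pt: "poly p t = t * t" for t by (simp add: p_def)
          have qt: "poly q t = t * t - c * c" for t by (simp add: q_def algebra_simps)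
          define b' where "b' = Fract p q"
          have b'R: "b' \<in> ratfun R" unfolding b'_def using ratfun_Fract[OF RR pS qS q0] .
          have valN: "z b' = Some 1" if "z \<in> M (ratfun R)" "z yvar = None" for z
          proof -
            interpret Splace R z using zS[OF that(1)] .
            show ?thesis using Q_inf_val[OF that(2) pS qS q0] dp dq unfolding b'_def by simp
          qed
          have valS: "t * t > c * c" if "z \<in> M (ratfun R)" "z yvar = Some t" "z b' = Some s" "s > 0" for z t s
          proof -
            interpret Splace R z using zS[OF that(1)] .
            have Zp: "z (Fp p) = Some (t * t)" using Q_Fp_fin[OF that(2) pS] pt by simp
            have Zq: "z (Fp q) = Some (t * t - c * c)" using Q_Fp_fin[OF that(2) qS] qt by simp
            have inR: "Fp p \<in> ratfun R" "Fp q \<in> ratfun R" using Fp_in[OF RR pS] Fp_in[OF RR qS] by auto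
            have iR: "inverse (Fp q) \<in> ratfun R" using subfieldD(6)[OF RS inR(2)] .
            have Fq0: "Fp q \<noteq> 0" using q0 Fp_eq0 by simp
            have bb: "b' = inverse (Fp q) * Fp p" unfolding b'_def Fract_Fp by simp
            show ?thesis
            proof (cases "t * t - c * c = 0")
              case True
              have "z (inverse (Fp q)) = None" using place_inv0[OF Qp RS inR(2) _ Fq0] Zq True by simp
              moreover have "t * t \<noteq> 0" using True c1 by auto
              ultimately have "z b' = None" unfolding bb using place_mult_none[OF Qp RS iR inR(1) _ Zp] by simp
              then show ?thesis using that(3) by simp
            next
              case False
              have "z (inverse (Fp q)) = Some (inverse (t * t - c * c))" using place_inv[OF Qp RS inR(2) Zq False] .
              then have "z b' = Some (inverse (t * t - c * c) * (t * t))" unfolding bb using place_mult[OF Qp iR inR(1) _ Zp] by simp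
              then have pos: "inverse (t * t - c * c) * (t * t) > 0" using that(3,4) by simp
              have "0 \<le> t * t" by simp
              then show ?thesis using pos by (auto simp: zero_less_mult_iff)
            qed
          qed
          show ?thesis
          proof (intro exI conjI)
            show "openin (Mtop (ratfun R)) (H' (ratfun R) b')" using H'_open[OF b'R] .
            show "z0 \<in> H' (ratfun R) b'" unfolding H'_def using z0M valN[OF z0M None] by auto
            show "H' (ratfun R) b' \<subseteq> Set"
            proof
              fix z assume z: "z \<in> H' (ratfun R) b'"
              then obtain s where zM: "z \<in> M (ratfun R)" and s: "z b' = Some s" "s > 0" unfolding H'_def by auto
              show "z \<in> Set"
              proof (cases "z yvar")
                case None
                then show ?thesis using SetI'[OF zM] r0 \<open>LI.V g = Some r0\<close> by (auto simp: Vof_def)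
              next
                case (Some t)
                have tt: "t * t > c * c" using valS[OF zM Some s] .
                have "\<not> \<bar>t\<bar> \<le> c"
                proof
                  assume "\<bar>t\<bar> \<le> c"
                  then have "\<bar>t\<bar> * \<bar>t\<bar> \<le> c * c" by (intro mult_mono) auto
                  then show False using tt by (simp add: abs_mult_self_eq)
                qed
                then have "T0 < \<bar>t\<bar>" using c1 by linarith
                then obtain r' where "r' > 0" "LF.V t g = Some r'" using T0 by blast
                then show ?thesis using SetI'[OF zM] Some by (auto simp: Vof_def)
              qed
            qed
          qed
        qed
      qed
      then show "openin (Mtop (ratfun R)) (iota \<xi> -` U \<inter> topspace (Mtop (ratfun R)))"
        unfolding TS Set_def .
    qed
  next
    show "inj_on (iota \<xi>) (M (ratfun R))"
    proof (rule inj_onI)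
      fix z1 z2 assume z: "z1 \<in> M (ratfun R)" "z2 \<in> M (ratfun R)" "iota \<xi> z1 = iota \<xi> z2"
      have co: "\<forall>i. \<xi> (coeff [:0, 1:] i) \<noteq> None" by (simp add: coeff_pCons xi0 xi1 split: nat.split)
      have "red [:0, 1:] = [:0, 1:]" unfolding poly_eq_iff coeff_red by (simp add: coeff_pCons phi0 phi1 split: nat.split)
      then have gy: "gauss (yvar :: 'f poly fract) = Some yvar"
        using gauss_spec[OF co] unfolding yvar_def by simp
      have "iota \<xi> z (yvar :: 'f poly fract) = z yvar" for z
        using iota_val[OF gy] Vof_y[OF Fb] by simp
      then have "z1 yvar = z2 yvar" using z(3) by metis
      then show "z1 = z2" using zeq[OF z(1)] zeq[OF z(2)] by simp
    qed
  qed
qed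


end
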